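(* Let $n\ge2$ and let $(y,z)$ be a solution on $[0,\infty)$ with $y,z>0$ of \[\dot y=z^2(n+1-y)-ny,\qquad \dot z=\tfrac{n+1}{n}z(n-1+y)-(n+z^2)z,\] for which $y,z\to0$ as $t\to\infty$. Then $\mu_{y,z}\in\mathfrak g\otimes\Lambda^2\mathfrak g^*$ ($\mathfrak g=\mathfrak{sl}_{n+1}(\mathbb C)$) converges as $t\to\infty$ to \[\mu_\infty:=[\cdot,\cdot]\big|_{\mathfrak{sl}_n(\mathbb C)\wedge\mathfrak{sl}_n(\mathbb C)}+[\cdot,\cdot]\big|_{\mathfrak{sl}_n(\mathbb C)\wedge\mathfrak s}+\sqrt{\frac{n^2-2}{n(n+1)}}\,\mathrm{Pr}_{\mathbb CI}\circ[\cdot,\cdot]\big|_{\mathfrak s\wedge\mathfrak s}.\] Moreover, the torsion-twisted Chern--Ricci operator $P_\infty=\lim_{t\to\infty}P_{y,z}$ of $(\mathfrak g,\mu_\infty,\langle\cdot,\cdot\rangle)$ is $P_\infty=n\,\mathrm{id}-\tfrac1nD$, where $D:=2\,\mathrm{id}_{\mathbb CI}+\mathrm{id}_{\mathfrak s}$ is a derivation of $\mu_\infty$. In particular, the simply-connected complex Lie group with left-invariant Hermitian metric corresponding to $(\mathfrak g,\mu_\infty,\langle\cdot,\cdot\rangle)$ is a shrinking algebraic $\mathrm{HCF}_+$ soliton.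
   Context: $\langle X,Y\rangle=\operatorname{tr}(XY^* )$ on $\mathfrak g=\mathfrak{sl}_{n+1}(\mathbb C)=\mathfrak{sl}_n(\mathbb C)\oplus\mathbb CI\oplus\mathfrak s$ (orthogonal), with $\mathfrak{sl}_n(\mathbb C)$ the upper-left block, $I=\sqrt{\tfrac1{n(n+1)}}\operatorname{diag}(1,\dots,1,-n)$, $\mathfrak s=\operatorname{span}_{\mathbb C}\{e_{i(n+1)},e_{(n+1)i}\}_{i=1}^n$; $\mathrm{Pr}_V$ is orthogonal projection onto $V$ and $[\cdot,\cdot]$ the commutator. $h_{y,z}=\mathrm{id}_{\mathfrak{sl}_n(\mathbb C)}+y^{-1/2}\mathrm{id}_{\mathbb CI}+z^{-1/2}\mathrm{id}_{\mathfrak s}$ and $\mu_{y,z}=h_{y,z}[h_{y,z}^{-1}\cdot,h_{y,z}^{-1}\cdot]$. For a complex Lie bracket $\mu$ and Hermitian inner product $g$, the torsion-twisted Chern--Ricci operator $P^g_\mu$ is the $g$-Hermitian endomorphism with $g(P^g_\mu X,X)=\sum_{i<j}|g(\mu(e_i,e_j),X)|^2$ for a $g$-unitary basis $\{e_i\}$; $P_{y,z}:=P^{\langle\cdot,\cdot\rangle}_{\mu_{y,z}}$. A simply-connected complex Lie group with left-invariant metric given by $(\mathfrak g,\mu,g)$ is a semi-algebraic $\mathrm{HCF}_+$ soliton if $P^g_\mu=\lambda\,\mathrm{id}+\tfrac12(D'+D'^* )$ with $\lambda\in\mathbb R$ and $D'$ a complex-linear derivation of $\mu$; algebraic if additionally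 $D'^*$ is a derivation; shrinking if the associated self-similar $\mathrm{HCF}_+$ solution $g_t=c(t)\varphi_t^*g$ has $c$ decreasing. *)

theory Defs
  imports "HOL-Analysis.Analysis"
begin

text \<open>Complex (n+1)x(n+1) matrices are represented as functions nat => nat => complex,
  with indices 0..n; index n plays the role of the (n+1)-st row/column.
  Matrices of interest vanish outside {0..n} x {0..n}.\<close>

type_synonym cmat = "nat \<Rightarrow> nat \<Rightarrow> complex"

definition madd :: "cmat \<Rightarrow> cmat \<Rightarrow> cmat" where
  "madd X Y = (\<lambda>a b. X a b + Y a b)"

definition mdiff :: "cmat \<Rightarrow> cmat \<Rightarrow> cmat" where
  "mdiff X Y = (\<lambda>a b. X a b - Y a b)"

definition msc :: "complex \<Rightarrow> cmat \<Rightarrow> cmat" where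
  "msc c X = (\<lambda>a b. c * X a b)"

definition mzero :: cmat where
  "mzero = (\<lambda>a b. 0)"

definition mtrace :: "nat \<Rightarrow> cmat \<Rightarrow> complex" where
  "mtrace n X = (\<Sum>a\<le>n. X a a)"

definition slg :: "nat \<Rightarrow> cmat set" where
  "slg n = {X. (\<forall>a b. (n < a \<or> n < b) \<longrightarrow> X a b = 0) \<and> mtrace n X = 0}"

definition minner :: "nat \<Rightarrow> cmat \<Rightarrow> cmat \<Rightarrow> complex" where
  "minner n X Y = (\<Sum>a\<le>n. \<Sum>b\<le>n. X a b * cnj (Y a b))"

definition comm :: "nat \<Rightarrow> cmat \<Rightarrow> cmat \<Rightarrow> cmat" where
  "comm n X Y = (\<lambda>a b. \<Sum>c\<le>n. X a c * Y c b - Y a c * X c b)"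

definition Iden :: "nat \<Rightarrow> cmat" where
  "Iden n = (\<lambda>a b. if a = b \<and> a \<le> n
      then complex_of_real (sqrt (1 / (real n * (real n + 1)))) * (if a < n then 1 else - of_nat n)
      else 0)"

text \<open>Orthogonal projections onto CI, s, sl_n (within g = sl_n + CI + s).\<close>
definition prCI :: "nat \<Rightarrow> cmat \<Rightarrow> cmat" where
  "prCI n X = msc (minner n X (Iden n)) (Iden n)"

definition prS :: "nat \<Rightarrow> cmat \<Rightarrow> cmat" where
  "prS n X = (\<lambda>a b. if (a < n \<and> b = n) \<or> (a = n \<and> b < n) then X a b else 0)"

definition prSL :: "nat \<Rightarrow> cmat \<Rightarrow> cmat" where
  "prSL n X = mdiff (mdiff X (prCI n X)) (prS n X)"

definition hmap :: "nat \<Rightarrow> real \<Rightarrow> real \<Rightarrow> cmat \<Rightarrow> cmat" where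
  "hmap n y z X = madd (prSL n X)
      (madd (msc (complex_of_real (y powr (-1/2))) (prCI n X))
            (msc (complex_of_real (z powr (-1/2))) (prS n X)))"

definition hinv :: "nat \<Rightarrow> real \<Rightarrow> real \<Rightarrow> cmat \<Rightarrow> cmat" where
  "hinv n y z X = madd (prSL n X)
      (madd (msc (complex_of_real (y powr (1/2))) (prCI n X))
            (msc (complex_of_real (z powr (1/2))) (prS n X)))"

definition mu_yz :: "nat \<Rightarrow> real \<Rightarrow> real \<Rightarrow> cmat \<Rightarrow> cmat \<Rightarrow> cmat" where
  "mu_yz n y z X Y = hmap n y z (comm n (hinv n y z X) (hinv n y z Y))"

definition mu_inf :: "nat \<Rightarrow> cmat \<Rightarrow> cmat \<Rightarrow> cmat" where
  "mu_inf n X Y =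
     madd (comm n (prSL n X) (prSL n Y))
    (madd (comm n (prSL n X) (prS n Y))
    (madd (comm n (prS n X) (prSL n Y))
          (msc (complex_of_real (sqrt ((real n ^ 2 - 2) / (real n * (real n + 1)))))
               (prCI n (comm n (prS n X) (prS n Y))))))"

definition unitary_basis :: "nat \<Rightarrow> cmat list \<Rightarrow> bool" where
  "unitary_basis n B \<longleftrightarrow> set B \<subseteq> slg n
     \<and> (\<forall>i<length B. \<forall>j<length B. minner n (B!i) (B!j) = (if i = j then 1 else 0))
     \<and> (\<forall>X\<in>slg n. \<exists>c. X = (\<lambda>a b. \<Sum>i<length B. c i * (B!i) a b))"

definition lin_endo :: "nat \<Rightarrow> (cmat \<Rightarrow> cmat) \<Rightarrow> bool" where
  "lin_endo n L \<longleftrightarrow> (\<forall>X\<in>slg n. L X \<in> slg n)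
     \<and> (\<forall>X\<in>slg n. \<forall>Y\<in>slg n. L (madd X Y) = madd (L X) (L Y))
     \<and> (\<forall>X\<in>slg n. \<forall>c. L (msc c X) = msc c (L X))"

text \<open>Torsion-twisted Chern--Ricci operator P^g_mu for g = <.,.>: the Hermitian
  endomorphism of g with <P X, X> = sum_{i<j} |<mu(e_i,e_j), X>|^2 for a (chosen)
  unitary basis; it is made unique by declaring it zero outside g.\<close>
definition P_op :: "nat \<Rightarrow> (cmat \<Rightarrow> cmat \<Rightarrow> cmat) \<Rightarrow> cmat \<Rightarrow> cmat" where
  "P_op n \<mu> = (let B = (SOME B. unitary_basis n B) in
     THE P. lin_endo n P
       \<and> (\<forall>X. X \<notin> slg n \<longrightarrow> P X = mzero)
       \<and> (\<forall>X\<in>slg n. \<forall>Y\<in>slg n. minner n (P X) Y = minner n X (P Y))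
       \<and> (\<forall>X\<in>slg n. minner n (P X) X =
            complex_of_real (\<Sum>j<length B. \<Sum>i<j. (cmod (minner n (\<mu> (B!i) (B!j)) X))\<^sup>2)))"

definition is_derivation :: "nat \<Rightarrow> (cmat \<Rightarrow> cmat \<Rightarrow> cmat) \<Rightarrow> (cmat \<Rightarrow> cmat) \<Rightarrow> bool" where
  "is_derivation n \<mu> D \<longleftrightarrow>
     (\<forall>X\<in>slg n. \<forall>Y\<in>slg n. D (\<mu> X Y) = madd (\<mu> (D X) Y) (\<mu> X (D Y)))"

definition algebraic_soliton :: "nat \<Rightarrow> (cmat \<Rightarrow> cmat \<Rightarrow> cmat) \<Rightarrow> real \<Rightarrow> bool" where
  "algebraic_soliton n \<mu> lam \<longleftrightarrow> (\<exists>D' Ds.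
      lin_endo n D' \<and> lin_endo n Ds
    \<and> (\<forall>X\<in>slg n. \<forall>Y\<in>slg n. minner n (D' X) Y = minner n X (Ds Y))
    \<and> is_derivation n \<mu> D' \<and> is_derivation n \<mu> Ds
    \<and> (\<forall>X\<in>slg n. P_op n \<mu> X =
          madd (msc (complex_of_real lam) X) (msc (1/2) (madd (D' X) (Ds X)))))"

definition shrinking_algebraic_soliton :: "nat \<Rightarrow> (cmat \<Rightarrow> cmat \<Rightarrow> cmat) \<Rightarrow> bool" where
  "shrinking_algebraic_soliton n \<mu> \<longleftrightarrow> (\<exists>lam>0. algebraic_soliton n \<mu> lam)"

definition Dder :: "nat \<Rightarrow> cmat \<Rightarrow> cmat" where
  "Dder n X = madd (msc 2 (prCI n X)) (prS n X)"

end

theory Submission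
  imports Defs
begin


lemma madd_app[simp]: "madd X Y a b = X a b + Y a b" by (simp add: madd_def)
lemma mdiff_app[simp]: "mdiff X Y a b = X a b - Y a b" by (simp add: mdiff_def)
lemma msc_app[simp]: "msc c X a b = c * X a b" by (simp add: msc_def)
lemma mzero_app[simp]: "mzero a b = 0" by (simp add: mzero_def)

lemma sum_atMost_split: "(\<Sum>a\<le>(n::nat). f a) = (\<Sum>a<n. f a) + (f n :: 'a::comm_monoid_add)"
  using sum.lessThan_Suc[of f n] unfolding lessThan_Suc_atMost by (simp add: add.commute)

definition sI :: "nat \<Rightarrow> complex" where
  "sI n = complex_of_real (sqrt (1 / (real n * (real n + 1))))"

lemma cnj_sI[simp]: "cnj (sI n) = sI n" by (simp add: sI_def)

lemma sI_sq: "n \<ge> 1 \<Longrightarrow> sI n * sI n * (of_nat n * (of_nat n + 1)) = 1"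
proof -
  assume "n \<ge> 1"
  have p: "real n * (real n + 1) > 0" using \<open>n\<ge>1\<close> by simp
  have "sqrt (1 / (real n * (real n + 1))) * sqrt (1 / (real n * (real n + 1))) = 1 / (real n * (real n + 1))"
    using p by simp
  hence "sqrt (1 / (real n * (real n + 1))) * sqrt (1 / (real n * (real n + 1))) * (real n * (real n + 1)) = 1"
    using p \<open>n\<ge>1\<close> by simp
  hence "complex_of_real (sqrt (1 / (real n * (real n + 1))) * sqrt (1 / (real n * (real n + 1))) * (real n * (real n + 1))) = 1"
    by simp
  thus ?thesis unfolding sI_def of_real_mult of_real_add of_real_of_nat_eq of_real_1 .
qed

lemma Iden_app: "Iden n a b = (if a = b \<and> a \<le> n then sI n * (if a < n then 1 else - of_nat n) else 0)"
  by (simp add: Iden_def sI_def)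

definition supp :: "nat \<Rightarrow> cmat \<Rightarrow> bool" where
  "supp n M \<longleftrightarrow> (\<forall>a b. (n < a \<or> n < b) \<longrightarrow> M a b = 0)"
definition blk :: "nat \<Rightarrow> cmat \<Rightarrow> bool" where
  "blk n M \<longleftrightarrow> (\<forall>a b. \<not> (a < n \<and> b < n) \<longrightarrow> M a b = 0)"
definition sty :: "nat \<Rightarrow> cmat \<Rightarrow> bool" where
  "sty n M \<longleftrightarrow> (\<forall>a b. \<not> ((a < n \<and> b = n) \<or> (a = n \<and> b < n)) \<longrightarrow> M a b = 0)"
definition dg :: "cmat \<Rightarrow> bool" where
  "dg M \<longleftrightarrow> (\<forall>a b. a \<noteq> b \<longrightarrow> M a b = 0)"

lemma minner_I: "minner n M (Iden n) = sI n * ((\<Sum>a<n. M a a) - of_nat n * M n n)"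
proof -
  have "minner n M (Iden n) = (\<Sum>a\<le>n. M a a * sI n * (if a < n then 1 else - of_nat n))"
    unfolding minner_def
  proof (rule sum.cong[OF refl])
    fix a assume a: "a \<in> {..n}"
    have "(\<Sum>b\<le>n. M a b * cnj (Iden n a b)) = (\<Sum>b\<le>n. if b = a then M a a * sI n * (if a < n then 1 else - of_nat n) else 0)"
      by (rule sum.cong) (use a in \<open>auto simp: Iden_app\<close>)
    also have "\<dots> = M a a * sI n * (if a < n then 1 else - of_nat n)" using a by simp
    finally show "(\<Sum>b\<le>n. M a b * cnj (Iden n a b)) = M a a * sI n * (if a < n then 1 else - of_nat n)" .
  qed
  also have "\<dots> = (\<Sum>a<n. M a a * sI n) + M n n * sI n * (- of_nat n)"
    by (simp add: sum_atMost_split)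
  also have "\<dots> = sI n * ((\<Sum>a<n. M a a) - of_nat n * M n n)"
    by (simp add: sum_distrib_left algebra_simps)
  finally show ?thesis .
qed

lemma trace_split: "mtrace n M = (\<Sum>a<n. M a a) + M n n"
  by (simp add: mtrace_def sum_atMost_split)

lemma slg_xI: "X \<in> slg n \<Longrightarrow> minner n X (Iden n) = - sI n * (of_nat n + 1) * X n n"
proof -
  assume "X \<in> slg n"
  hence "(\<Sum>a<n. X a a) = - X n n" using trace_split[of n X] by (simp add: slg_def eq_neg_iff_add_eq_0)
  thus ?thesis by (simp add: minner_I algebra_simps)
qed


lemma comm_app: "comm n A B a b = (\<Sum>c\<le>n. A a c * B c b - B a c * A c b)"
  by (simp add: comm_def)

lemma comm_madd1: "comm n (madd A B) C = madd (comm n A C) (comm n B C)"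
  by (rule ext, rule ext) (simp add: comm_def sum.distrib[symmetric] algebra_simps)
lemma comm_madd2: "comm n C (madd A B) = madd (comm n C A) (comm n C B)"
  by (rule ext, rule ext) (simp add: comm_def sum.distrib[symmetric] algebra_simps)
lemma comm_msc1: "comm n (msc c A) C = msc c (comm n A C)"
  by (rule ext, rule ext) (simp add: comm_def sum_distrib_left algebra_simps)
lemma comm_msc2: "comm n C (msc c A) = msc c (comm n C A)"
  by (rule ext, rule ext) (simp add: comm_def sum_distrib_left algebra_simps)
lemma comm_mzero1[simp]: "comm n mzero C = mzero"
  by (rule ext, rule ext) (simp add: comm_def)
lemma comm_mzero2[simp]: "comm n C mzero = mzero"
  by (rule ext, rule ext) (simp add: comm_def)
lemma comm_anti: "comm n B A = msc (-1) (comm n A B)"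
  by (rule ext, rule ext) (simp add: comm_def sum_negf[symmetric] algebra_simps)
lemma comm_self[simp]: "comm n A A = mzero"
  by (rule ext, rule ext) (simp add: comm_def)

lemma minner_madd1: "minner n (madd A B) C = minner n A C + minner n B C"
  by (simp add: minner_def sum.distrib[symmetric] algebra_simps)
lemma minner_madd2: "minner n C (madd A B) = minner n C A + minner n C B"
  by (simp add: minner_def sum.distrib[symmetric] algebra_simps)
lemma minner_mdiff1: "minner n (mdiff A B) C = minner n A C - minner n B C"
  by (simp add: minner_def sum_subtractf[symmetric] algebra_simps)
lemma minner_mdiff2: "minner n C (mdiff A B) = minner n C A - minner n C B"
  by (simp add: minner_def sum_subtractf[symmetric] algebra_simps)
lemma minner_msc1: "minner n (msc c A) C = c * minner n A C"
  by (simp add: minner_def sum_distrib_left algebra_simps)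
lemma minner_msc2: "minner n C (msc c A) = cnj c * minner n C A"
  by (simp add: minner_def sum_distrib_left algebra_simps)
lemma minner_mzero1[simp]: "minner n mzero C = 0" by (simp add: minner_def)
lemma minner_mzero2[simp]: "minner n C mzero = 0" by (simp add: minner_def)
lemma minner_cnj: "cnj (minner n A B) = minner n B A"
  by (simp add: minner_def mult.commute)

lemmas minner_lin = minner_madd1 minner_madd2 minner_mdiff1 minner_mdiff2 minner_msc1 minner_msc2

lemma prCI_madd: "prCI n (madd A B) = madd (prCI n A) (prCI n B)"
  by (rule ext, rule ext) (simp add: prCI_def minner_madd1 algebra_simps)
lemma prCI_msc: "prCI n (msc c A) = msc c (prCI n A)"
  by (rule ext, rule ext) (simp add: prCI_def minner_msc1 algebra_simps)
lemma prCI_mzero[simp]: "prCI n mzero = mzero"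
  by (rule ext, rule ext) (simp add: prCI_def)
lemma prS_madd: "prS n (madd A B) = madd (prS n A) (prS n B)"
  by (rule ext, rule ext) (simp add: prS_def)
lemma prS_msc: "prS n (msc c A) = msc c (prS n A)"
  by (rule ext, rule ext) (simp add: prS_def)
lemma prS_mzero[simp]: "prS n mzero = mzero"
  by (rule ext, rule ext) (simp add: prS_def)
lemma prSL_madd: "prSL n (madd A B) = madd (prSL n A) (prSL n B)"
  by (rule ext, rule ext) (simp add: prSL_def prCI_madd prS_madd)
lemma prSL_msc: "prSL n (msc c A) = msc c (prSL n A)"
  by (rule ext, rule ext) (simp add: prSL_def prCI_msc prS_msc algebra_simps)
lemma prSL_mzero[simp]: "prSL n mzero = mzero"
  by (rule ext, rule ext) (simp add: prSL_def)

lemma msc_mzero[simp]: "msc c mzero = mzero" by (rule ext, rule ext) simp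
lemma madd_mzero1[simp]: "madd mzero A = A" by (rule ext, rule ext) simp
lemma madd_mzero2[simp]: "madd A mzero = A" by (rule ext, rule ext) simp
lemma msc_zero[simp]: "msc 0 A = mzero" by (rule ext, rule ext) simp

lemmas lin_simps = comm_madd1 comm_madd2 comm_msc1 comm_msc2 prCI_madd prCI_msc prS_madd prS_msc
  prSL_madd prSL_msc

lemma trace_comm: "mtrace n (comm n A B) = 0"
proof -
  have "mtrace n (comm n A B) = (\<Sum>a\<le>n. \<Sum>c\<le>n. A a c * B c a) - (\<Sum>a\<le>n. \<Sum>c\<le>n. B a c * A c a)"
    by (simp add: mtrace_def comm_def sum_subtractf)
  also have "(\<Sum>a\<le>n. \<Sum>c\<le>n. B a c * A c a) = (\<Sum>a\<le>n. \<Sum>c\<le>n. A a c * B c a)"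
    by (subst sum.swap) (simp add: mult.commute)
  finally show ?thesis by simp
qed

lemma slg_supp: "X \<in> slg n \<Longrightarrow> supp n X" by (auto simp: slg_def supp_def)
lemma blk_supp: "blk n X \<Longrightarrow> supp n X" by (simp add: blk_def supp_def)
lemma sty_supp: "sty n X \<Longrightarrow> supp n X" by (auto simp: sty_def supp_def)

lemma sty_prS: "sty n (prS n X)" by (simp add: sty_def prS_def)
lemma dg_Iden: "dg (Iden n)" by (simp add: dg_def Iden_def)
lemma dg_msc: "dg A \<Longrightarrow> dg (msc c A)" by (simp add: dg_def)
lemma dg_prCI: "dg (prCI n X)" by (simp add: prCI_def dg_msc dg_Iden)

lemma blk_prSL: assumes X: "X \<in> slg n" and n: "n \<ge> 1" shows "blk n (prSL n X)"
  unfolding blk_def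
proof (intro allI impI)
  fix a b assume ab: "\<not> (a < n \<and> b < n)"
  have xi: "minner n X (Iden n) = - sI n * (of_nat n + 1) * X n n" by (rule slg_xI[OF X])
  have sq: "sI n * sI n * (of_nat n * (of_nat n + 1)) = 1" using sI_sq[OF n] .
  have sup: "\<And>a b. (n < a \<or> n < b) \<Longrightarrow> X a b = 0" using X by (auto simp: slg_def)
  show "prSL n X a b = 0"
  proof (cases "a = n \<and> b = n")
    case True
    have "prSL n X a b = X n n - (- sI n * (of_nat n + 1) * X n n) * (sI n * (- of_nat n))"
      using True by (simp add: prSL_def prCI_def prS_def xi Iden_app)
    also have "\<dots> = X n n - (sI n * sI n * (of_nat n * (of_nat n + 1))) * X n n"
      by (simp add: algebra_simps)
    finally show ?thesis using sq by simp
  next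
    case False
    then show ?thesis using ab sup[of a b]
      by (auto simp: prSL_def prCI_def prS_def Iden_app)
  qed
qed

lemma comm_blk_blk: assumes A: "blk n A" and B: "blk n B" shows "blk n (comm n A B)"
  unfolding blk_def comm_app
proof (intro allI impI sum.neutral ballI)
  fix a b c assume ab: "\<not> (a < n \<and> b < n)"
  have 1: "A a c * B c b = 0"
    using A B ab unfolding blk_def by (cases "a < n \<and> c < n") auto
  have 2: "B a c * A c b = 0"
    using A B ab unfolding blk_def by (cases "a < n \<and> c < n") auto
  show "A a c * B c b - B a c * A c b = 0" unfolding 1 2 by simp
qed

lemma comm_blk_sty: assumes A: "blk n A" and B: "sty n B" shows "sty n (comm n A B)"
  unfolding sty_def comm_app
proof (intro allI impI sum.neutral ballI)
  fix a b c assume ab: "\<not> ((a < n \<and> b = n) \<or> (a = n \<and> b < n))"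
  have 1: "A a c * B c b = 0"
    using A B ab unfolding blk_def sty_def by (cases "a < n \<and> c < n") auto
  have 2: "B a c * A c b = 0"
    using A B ab unfolding blk_def sty_def by (cases "c < n \<and> b < n") auto
  show "A a c * B c b - B a c * A c b = 0" unfolding 1 2 by simp
qed

lemma comm_sty_blk: assumes A: "sty n A" and B: "blk n B" shows "sty n (comm n A B)"
proof -
  have "sty n (comm n B A)" by (rule comm_blk_sty[OF B A])
  thus ?thesis by (subst comm_anti) (simp add: sty_def)
qed

lemma comm_dg_sty: assumes A: "dg A" and B: "sty n B" shows "sty n (comm n A B)"
  unfolding sty_def comm_app
proof (intro allI impI sum.neutral ballI)
  fix a b c assume ab: "\<not> ((a < n \<and> b = n) \<or> (a = n \<and> b < n))"
  have 1: "A a c * B c b = 0"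
    using A B ab unfolding dg_def sty_def by (cases "a = c") auto
  have 2: "B a c * A c b = 0"
    using A B ab unfolding dg_def sty_def by (cases "c = b") auto
  show "A a c * B c b - B a c * A c b = 0" unfolding 1 2 by simp
qed

lemma comm_sty_dg: assumes A: "sty n A" and B: "dg B" shows "sty n (comm n A B)"
proof -
  have "sty n (comm n B A)" by (rule comm_dg_sty[OF B A])
  thus ?thesis by (subst comm_anti) (simp add: sty_def)
qed

lemma comm_dg_dg: assumes A: "dg A" and B: "dg B" shows "comm n A B = mzero"
proof (intro ext)
  fix a b
  show "comm n A B a b = mzero a b"
    unfolding comm_app mzero_app
  proof (intro sum.neutral ballI)
    fix c
    show "A a c * B c b - B a c * A c b = 0"
      using A B unfolding dg_def by (cases "a = c"; cases "c = b") auto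
  qed
qed


lemma blk_prS: "blk n M \<Longrightarrow> prS n M = mzero"
  by (intro ext) (auto simp: blk_def prS_def)
lemma dg_prS: "dg M \<Longrightarrow> prS n M = mzero"
  by (intro ext) (auto simp: dg_def prS_def)
lemma sty_prS_id: "sty n M \<Longrightarrow> prS n M = M"
  by (intro ext) (auto simp: sty_def prS_def)
lemma sty_prCI: "sty n M \<Longrightarrow> prCI n M = mzero"
proof -
  assume "sty n M"
  hence "\<And>a. M a a = 0" by (auto simp: sty_def)
  thus ?thesis by (intro ext) (simp add: prCI_def minner_I)
qed
lemma sty_prSL: "sty n M \<Longrightarrow> prSL n M = mzero"
  by (intro ext) (simp add: prSL_def sty_prCI sty_prS_id)

lemma blk_comm_prCI: assumes "blk n A" "blk n B" shows "prCI n (comm n A B) = mzero"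
proof -
  have b: "blk n (comm n A B)" using comm_blk_blk[OF assms] .
  hence nn: "comm n A B n n = 0" by (simp add: blk_def)
  have "(\<Sum>a<n. comm n A B a a) = 0" using trace_comm[of n A B] nn by (simp add: trace_split)
  thus ?thesis using nn by (intro ext) (simp add: prCI_def minner_I)
qed

lemma prSL_eq_self: "prCI n M = mzero \<Longrightarrow> prS n M = mzero \<Longrightarrow> prSL n M = M"
  by (intro ext) (simp add: prSL_def)

lemma comm_blk_Iden: assumes A: "blk n A" shows "comm n A (Iden n) = mzero"
proof (intro ext)
  fix a b
  have 1: "(\<Sum>c\<le>n. A a c * Iden n c b) = (if b \<le> n then A a b * Iden n b b else 0)"
  proof -
    have "(\<Sum>c\<le>n. A a c * Iden n c b) = (\<Sum>c\<le>n. if c = b then A a b * Iden n b b else 0)"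
      by (rule sum.cong) (auto simp: Iden_app)
    thus ?thesis by simp
  qed
  have 2: "(\<Sum>c\<le>n. Iden n a c * A c b) = (if a \<le> n then Iden n a a * A a b else 0)"
  proof -
    have "(\<Sum>c\<le>n. Iden n a c * A c b) = (\<Sum>c\<le>n. if c = a then Iden n a a * A a b else 0)"
      by (rule sum.cong) (auto simp: Iden_app)
    thus ?thesis by simp
  qed
  show "comm n A (Iden n) a b = mzero a b"
  proof (cases "a < n \<and> b < n")
    case True
    thus ?thesis unfolding comm_app sum_subtractf 1 2 by (simp add: Iden_app)
  next
    case False
    hence "A a b = 0" using A by (simp add: blk_def)
    thus ?thesis unfolding comm_app sum_subtractf 1 2 by simp
  qed
qed

lemma Iden_Iden: "n \<ge> 1 \<Longrightarrow> minner n (Iden n) (Iden n) = 1"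
proof -
  assume n: "n \<ge> 1"
  have "minner n (Iden n) (Iden n) = sI n * (of_nat n * sI n - of_nat n * (sI n * - of_nat n))"
    by (simp add: minner_I Iden_app)
  also have "\<dots> = sI n * sI n * (of_nat n * (of_nat n + 1))" by (simp add: algebra_simps)
  finally show ?thesis using sI_sq[OF n] by simp
qed

lemma prCI_prCI: "n \<ge> 1 \<Longrightarrow> prCI n (prCI n M) = prCI n M"
  by (simp add: prCI_def minner_msc1 Iden_Iden)
lemma prS_prCI: "prS n (prCI n M) = mzero" by (rule dg_prS[OF dg_prCI])
lemma prCI_prS: "prCI n (prS n M) = mzero" by (rule sty_prCI[OF sty_prS])
lemma prS_prS: "prS n (prS n M) = prS n M" by (rule sty_prS_id[OF sty_prS])
lemma prSL_prS: "prSL n (prS n M) = mzero" by (rule sty_prSL[OF sty_prS])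
lemma prSL_prCI: "n \<ge> 1 \<Longrightarrow> prSL n (prCI n M) = mzero"
  by (intro ext) (simp add: prSL_def prCI_prCI prS_prCI)
lemma decomp: "M = madd (prSL n M) (madd (prCI n M) (prS n M))"
  by (intro ext) (simp add: prSL_def)
lemma prCI_mdiff: "prCI n (mdiff A B) = mdiff (prCI n A) (prCI n B)"
  by (rule ext, rule ext) (simp add: prCI_def minner_mdiff1 algebra_simps)
lemma prS_mdiff: "prS n (mdiff A B) = mdiff (prS n A) (prS n B)"
  by (rule ext, rule ext) (simp add: prS_def)
lemma prCI_prSL: "n \<ge> 1 \<Longrightarrow> prCI n (prSL n M) = mzero"
  by (intro ext) (simp add: prSL_def prCI_mdiff prCI_prCI prCI_prS)
lemma prS_prSL: "prS n (prSL n M) = mzero"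
  by (intro ext) (simp add: prSL_def prS_def prCI_def Iden_app)
lemma prSL_prSL: "n \<ge> 1 \<Longrightarrow> prSL n (prSL n M) = prSL n M"
  by (rule prSL_eq_self[OF prCI_prSL prS_prSL])

lemma supp_comm: "supp n A \<Longrightarrow> supp n B \<Longrightarrow> supp n (comm n A B)"
  unfolding supp_def comm_app by auto
lemma slg_iff: "X \<in> slg n \<longleftrightarrow> supp n X \<and> mtrace n X = 0"
  by (auto simp: slg_def supp_def)
lemma slg_comm: "supp n A \<Longrightarrow> supp n B \<Longrightarrow> comm n A B \<in> slg n"
  by (simp add: slg_iff supp_comm trace_comm)
lemma slg_madd: "X \<in> slg n \<Longrightarrow> Y \<in> slg n \<Longrightarrow> madd X Y \<in> slg n"
  by (simp add: slg_def mtrace_def sum.distrib)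
lemma slg_mdiff: "X \<in> slg n \<Longrightarrow> Y \<in> slg n \<Longrightarrow> mdiff X Y \<in> slg n"
  by (simp add: slg_def mtrace_def sum_subtractf)
lemma slg_msc: "X \<in> slg n \<Longrightarrow> msc c X \<in> slg n"
  by (simp add: slg_def mtrace_def sum_distrib_left[symmetric])
lemma slg_mzero: "mzero \<in> slg n"
  by (simp add: slg_def mtrace_def)
lemma slg_Iden: "Iden n \<in> slg n"
  by (simp add: slg_def mtrace_def Iden_app sum_atMost_split)
lemma slg_prCI: "prCI n X \<in> slg n"
  by (simp add: prCI_def slg_msc slg_Iden)
lemma slg_prS: "prS n X \<in> slg n"
proof -
  have "supp n (prS n X)" using sty_supp[OF sty_prS] .
  moreover have "mtrace n (prS n X) = 0" unfolding mtrace_def prS_def by (rule sum.neutral) auto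
  ultimately show ?thesis by (simp add: slg_iff)
qed
lemma slg_prSL: "X \<in> slg n \<Longrightarrow> prSL n X \<in> slg n"
  unfolding prSL_def by (intro slg_mdiff slg_prCI slg_prS)

lemma slg_supp': "X \<in> slg n \<Longrightarrow> supp n X" by (rule slg_supp)


lemma comm_sty_sty: assumes A: "sty n A" and B: "sty n B" shows "prS n (comm n A B) = mzero"
proof (intro ext)
  fix a b
  show "prS n (comm n A B) a b = mzero a b"
  proof (cases "(a < n \<and> b = n) \<or> (a = n \<and> b < n)")
    case True
    have "comm n A B a b = 0" unfolding comm_app
    proof (intro sum.neutral ballI)
      fix c
      have 1: "A a c * B c b = 0"
        using A B True unfolding sty_def by (cases "c = n") auto
      have 2: "B a c * A c b = 0"
        using A B True unfolding sty_def by (cases "c = n") auto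
      show "A a c * B c b - B a c * A c b = 0" unfolding 1 2 by simp
    qed
    thus ?thesis by (simp add: prS_def)
  next
    case False thus ?thesis using False by (auto simp: prS_def)
  qed
qed

context
  fixes n :: nat and X Y :: cmat
  assumes n1: "n \<ge> 1" and X: "X \<in> slg n" and Y: "Y \<in> slg n"
begin

lemma bX: "blk n (prSL n X)" by (rule blk_prSL[OF X n1])
lemma bY: "blk n (prSL n Y)" by (rule blk_prSL[OF Y n1])

lemma f12: "comm n (prSL n X) (prCI n Y) = mzero"
  by (simp add: prCI_def comm_msc2 comm_blk_Iden[OF bX])
lemma f21: "comm n (prCI n X) (prSL n Y) = mzero"
  by (subst comm_anti) (simp add: prCI_def comm_msc2 comm_blk_Iden[OF bY])
lemma f22: "comm n (prCI n X) (prCI n Y) = mzero"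
  by (rule comm_dg_dg[OF dg_prCI dg_prCI])
lemma s13: "sty n (comm n (prSL n X) (prS n Y))" by (rule comm_blk_sty[OF bX sty_prS])
lemma s31: "sty n (comm n (prS n X) (prSL n Y))" by (rule comm_sty_blk[OF sty_prS bY])
lemma s23: "sty n (comm n (prCI n X) (prS n Y))" by (rule comm_dg_sty[OF dg_prCI sty_prS])
lemma s32: "sty n (comm n (prS n X) (prCI n Y))" by (rule comm_sty_dg[OF sty_prS dg_prCI])
lemma f33: "prS n (comm n (prS n X) (prS n Y)) = mzero" by (rule comm_sty_sty[OF sty_prS sty_prS])
lemma f11a: "prCI n (comm n (prSL n X) (prSL n Y)) = mzero" by (rule blk_comm_prCI[OF bX bY])
lemma f11b: "prS n (comm n (prSL n X) (prSL n Y)) = mzero" by (rule blk_prS[OF comm_blk_blk[OF bX bY]])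
lemma f11c: "prSL n (comm n (prSL n X) (prSL n Y)) = comm n (prSL n X) (prSL n Y)"
  by (rule prSL_eq_self[OF f11a f11b])

lemmas facts = f12 f21 f22 f33 f11a f11b f11c
  sty_prCI[OF s13] sty_prCI[OF s31] sty_prCI[OF s23] sty_prCI[OF s32]
  sty_prSL[OF s13] sty_prSL[OF s31] sty_prSL[OF s23] sty_prSL[OF s32]
  sty_prS_id[OF s13] sty_prS_id[OF s31] sty_prS_id[OF s23] sty_prS_id[OF s32]

definition "F1 = madd (comm n (prSL n X) (prSL n Y)) (madd (comm n (prSL n X) (prS n Y)) (comm n (prS n X) (prSL n Y)))"
definition "F2 = madd (comm n (prCI n X) (prS n Y)) (comm n (prS n X) (prCI n Y))"
definition "F3 = prSL n (comm n (prS n X) (prS n Y))"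
definition "F4 = prCI n (comm n (prS n X) (prS n Y))"

lemma mu_yz_expand:
  assumes y: "y > 0" and z: "z > 0"
  shows "mu_yz n y z X Y a b = F1 a b + complex_of_real (sqrt y) * F2 a b + complex_of_real z * F3 a b
      + complex_of_real (z / sqrt y) * F4 a b"
proof -
  have e1: "y powr (1/2) = sqrt y" using y by (simp add: powr_half_sqrt)
  have e2: "y powr (-1/2) = 1 / sqrt y" using y by (simp add: powr_minus_divide powr_half_sqrt)
  have e3: "z powr (1/2) = sqrt z" using z by (simp add: powr_half_sqrt)
  have e4: "z powr (-1/2) = 1 / sqrt z" using z by (simp add: powr_minus_divide powr_half_sqrt)
  have sz: "complex_of_real (sqrt z) \<noteq> 0" "complex_of_real (sqrt y) \<noteq> 0" using y z by auto
  have zc: "complex_of_real z = complex_of_real (sqrt z) * complex_of_real (sqrt z)"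
    using z by (simp flip: of_real_mult)
  show ?thesis
    unfolding mu_yz_def hmap_def hinv_def e1 e2 e3 e4
    apply (simp only: lin_simps facts msc_mzero madd_mzero1 madd_mzero2 comm_mzero1 comm_mzero2 prCI_mzero prS_mzero prSL_mzero)
    apply (simp add: F1_def F2_def F3_def F4_def)
    using y z apply (simp add: field_simps sz zc)
    done
qed

end


lemma attract:
  fixes f f' :: "real \<Rightarrow> real"
  assumes der: "\<And>t. t \<ge> T \<Longrightarrow> (f has_real_derivative f' t) (at t)"
    and eta: "\<eta> > 0"
    and dec: "\<And>t. t \<ge> T \<Longrightarrow> f t > c \<Longrightarrow> f' t \<le> - \<eta>"
  shows "\<exists>T'. \<forall>t\<ge>T'. f t \<le> c"
proof -
  obtain t0 where t0: "t0 \<ge> T" "f t0 \<le> c"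
  proof (rule ccontr)
    assume "\<not> thesis"
    with that have gt: "\<And>t. t \<ge> T \<Longrightarrow> f t > c" by force
    define t where "t = T + \<bar>f T - c\<bar> / \<eta> + 1"
    have "\<bar>f T - c\<bar> / \<eta> \<ge> 0" using eta by simp
    hence Tt: "T < t" by (simp add: t_def)
    obtain \<xi> where xi: "T < \<xi>" "\<xi> < t" "f t - f T = (t - T) * f' \<xi>"
      using MVT2[OF Tt, of f f'] der by auto
    have "f' \<xi> \<le> - \<eta>" using dec[of \<xi>] gt[of \<xi>] xi by auto
    hence "(t - T) * f' \<xi> \<le> (t - T) * (- \<eta>)" using Tt by (intro mult_left_mono) auto
    also have "\<dots> = - \<bar>f T - c\<bar> - \<eta>" using eta by (simp add: t_def field_simps)
    finally have "f t < c" using xi eta by linarith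
    thus False using gt[of t] Tt by auto
  qed
  have "\<forall>t\<ge>t0. f t \<le> c"
  proof (rule ccontr)
    assume "\<not> (\<forall>t\<ge>t0. f t \<le> c)"
    then obtain t1 where t1: "t1 \<ge> t0" "f t1 > c" by auto
    have cont: "continuous_on {t0..t1} f"
      using t0(1) by (intro continuous_at_imp_continuous_on ballI DERIV_isCont[OF der]) auto
    obtain m where m: "m \<in> {t0..t1}" "\<And>s. s \<in> {t0..t1} \<Longrightarrow> f s \<le> f m"
      using continuous_attains_sup[OF compact_Icc _ cont] t1 by auto
    have fm: "f m > c" using m(2)[of t1] t1 by auto
    hence mt0: "m > t0" using m(1) t0(2) by (cases "m = t0") auto
    have dm: "f' m < 0" using dec[of m] fm m(1) t0(1) eta by auto
    obtain d where d: "d > 0" "\<And>h. h > 0 \<Longrightarrow> h < d \<Longrightarrow> f m < f (m - h)"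
      using DERIV_neg_dec_left[OF der[of m] dm] m(1) t0(1) by auto
    define h where "h = min (d/2) (m - t0)"
    have "f m < f (m - h)" using d mt0 by (intro d(2)) (auto simp: h_def)
    moreover have "m - h \<in> {t0..t1}" using m(1) mt0 d by (auto simp: h_def)
    ultimately show False using m(2) by force
  qed
  thus ?thesis by blast
qed

lemma lin_ode_limit:
  fixes w a b :: "real \<Rightarrow> real"
  assumes der: "\<And>t. t \<ge> T0 \<Longrightarrow> (w has_real_derivative (a t - b t * w t)) (at t)"
    and a: "(a \<longlongrightarrow> \<alpha>) at_top" and b: "(b \<longlongrightarrow> \<beta>) at_top" and bpos: "\<beta> > 0"
  shows "(w \<longlongrightarrow> \<alpha> / \<beta>) at_top"
proof -
  define u where "u t = w t - \<alpha> / \<beta>" for t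
  define eps where "eps t = (a t - \<alpha>) - \<alpha> * (b t - \<beta>) / \<beta>" for t
  have ueq: "a t - b t * w t = eps t - b t * u t" for t
    using bpos by (simp add: u_def eps_def field_simps)
  have epsl: "(eps \<longlongrightarrow> 0) at_top"
  proof -
    have "((\<lambda>t. (a t - \<alpha>) - \<alpha> * (b t - \<beta>) / \<beta>) \<longlongrightarrow> (\<alpha> - \<alpha>) - \<alpha> * (\<beta> - \<beta>) / \<beta>) at_top"
      using bpos by (intro tendsto_intros a b) auto
    thus ?thesis by (simp add: eps_def[abs_def])
  qed
  have main: "\<forall>\<^sub>F t in at_top. \<bar>u t\<bar> \<le> \<delta>" if dpos: "\<delta> > 0" for \<delta>
  proof -
    have e1: "\<forall>\<^sub>F t in at_top. \<bar>eps t\<bar> < \<beta> * \<delta> / 4"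
    proof -
      have bd0: "\<beta> * \<delta> / 4 > 0" using bpos dpos by simp
      show ?thesis using epsl[unfolded tendsto_iff, rule_format, OF bd0] by (simp add: dist_real_def)
    qed
    have e2: "\<forall>\<^sub>F t in at_top. b t > \<beta> / 2"
    proof -
      have bd0: "\<beta> / 2 > 0" using bpos by simp
      show ?thesis using b[unfolded tendsto_iff, rule_format, OF bd0]
      proof (rule eventually_mono)
        fix x assume "dist (b x) \<beta> < \<beta> / 2"
        thus "b x > \<beta> / 2" unfolding dist_real_def by (cases "b x \<ge> \<beta>") auto
      qed
    qed
    obtain T1 where T1: "\<And>t. t \<ge> T1 \<Longrightarrow> \<bar>eps t\<bar> < \<beta> * \<delta> / 4 \<and> b t > \<beta> / 2"
      using eventually_conj[OF e1 e2] by (auto simp: eventually_at_top_linorder)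
    define T2 where "T2 = max T0 T1"
    have du: "(u has_real_derivative (eps t - b t * u t)) (at t)" if "t \<ge> T2" for t
    proof -
      have "((\<lambda>t. w t - \<alpha> / \<beta>) has_real_derivative (a t - b t * w t - 0)) (at t)"
        using der[of t] that by (intro derivative_intros) (auto simp: T2_def)
      thus ?thesis using ueq[of t] by (simp add: u_def[abs_def])
    qed
    have dnu: "((\<lambda>t. - u t) has_real_derivative (- (eps t - b t * u t))) (at t)" if "t \<ge> T2" for t
      using du[OF that] by (rule DERIV_minus)
    have bd: "\<beta> * \<delta> / 4 > 0" using bpos dpos by simp
    obtain Ta where Ta: "\<And>t. t \<ge> Ta \<Longrightarrow> u t \<le> \<delta>"
    proof -
      have "\<exists>T'. \<forall>t\<ge>T'. u t \<le> \<delta>"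
      proof (rule attract[OF du bd])
        fix t assume t: "t \<ge> T2" "u t > \<delta>"
        have "b t > \<beta>/2" "\<bar>eps t\<bar> < \<beta> * \<delta> / 4" using T1[of t] t by (auto simp: T2_def)
        moreover have "b t * u t \<ge> (\<beta>/2) * \<delta>"
          using t \<open>b t > \<beta>/2\<close> bpos dpos by (intro mult_mono) auto
        ultimately show "eps t - b t * u t \<le> - (\<beta> * \<delta> / 4)" by linarith
      qed auto
      thus ?thesis using that by blast
    qed
    obtain Tb where Tb: "\<And>t. t \<ge> Tb \<Longrightarrow> - u t \<le> \<delta>"
    proof -
      have "\<exists>T'. \<forall>t\<ge>T'. - u t \<le> \<delta>"
      proof (rule attract[OF dnu bd])
        fix t assume t: "t \<ge> T2" "- u t > \<delta>"
        have "b t > \<beta>/2" "\<bar>eps t\<bar> < \<beta> * \<delta> / 4" using T1[of t] t by (auto simp: T2_def)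
        moreover have "b t * (- u t) \<ge> (\<beta>/2) * \<delta>"
          using t \<open>b t > \<beta>/2\<close> bpos dpos by (intro mult_mono) auto
        ultimately show "- (eps t - b t * u t) \<le> - (\<beta> * \<delta> / 4)" by (simp add: algebra_simps)
      qed auto
      thus ?thesis using that by blast
    qed
    show ?thesis unfolding eventually_at_top_linorder
      by (rule exI[of _ "max Ta Tb"]) (use Ta Tb in \<open>auto simp: abs_le_iff\<close>)
  qed
  have "(u \<longlongrightarrow> 0) at_top"
    unfolding tendsto_iff dist_real_def
  proof (intro allI impI)
    fix e :: real assume "e > 0"
    hence "\<forall>\<^sub>F t in at_top. \<bar>u t\<bar> \<le> e/2" by (intro main) simp
    thus "\<forall>\<^sub>F t in at_top. \<bar>u t - 0\<bar> < e" by eventually_elim (use \<open>e > 0\<close> in auto)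
  qed
  hence "((\<lambda>t. u t + \<alpha> / \<beta>) \<longlongrightarrow> 0 + \<alpha> / \<beta>) at_top" by (intro tendsto_add tendsto_const)
  thus ?thesis by (simp add: u_def)
qed


lemma ratio_limit:
  fixes n :: nat and y z :: "real \<Rightarrow> real"
  assumes n2: "n \<ge> 2"
    and pos: "\<And>t. t \<ge> 0 \<Longrightarrow> y t > 0 \<and> z t > 0"
    and ode_y: "\<And>t. t \<ge> 0 \<Longrightarrow>
        (y has_real_derivative ((z t)\<^sup>2 * (real n + 1 - y t) - real n * y t)) (at t within {0..})"
    and ode_z: "\<And>t. t \<ge> 0 \<Longrightarrow>
        (z has_real_derivative ((real n + 1) / real n * z t * (real n - 1 + y t) - (real n + (z t)\<^sup>2) * z t))
          (at t within {0..})"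
    and y0: "(y \<longlongrightarrow> 0) at_top"
    and z0: "(z \<longlongrightarrow> 0) at_top"
  shows "((\<lambda>t. z t / sqrt (y t)) \<longlongrightarrow> sqrt ((real n ^ 2 - 2) / (real n * (real n + 1)))) at_top"
proof -
  have nr: "real n \<ge> 2" using n2 by simp
  define r where "r t = (real n + 1) / real n * (real n - 1 + y t) - (real n + (z t)\<^sup>2)" for t
  define a where "a t = real n + 1 - y t" for t
  define b where "b t = real n + 2 * r t" for t
  define w where "w t = y t / (z t)\<^sup>2" for t
  have at: "at t within {0..} = at t" if "t > 0" for t :: real
  proof -
    have "at t within {0<..} = at t" using that by (intro at_within_open) auto
    moreover have "at t within {0<..} \<le> at t within {0..}" by (intro at_le) auto
    moreover have "at t within {0..} \<le> at t" by (simp add: at_le)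
    ultimately show ?thesis by (metis antisym)
  qed
  have dy: "(y has_real_derivative ((z t)\<^sup>2 * (real n + 1 - y t) - real n * y t)) (at t)" if "t > 0" for t
    using ode_y[of t] that at[OF that] by simp
  have dz: "(z has_real_derivative (z t * r t)) (at t)" if "t > 0" for t
  proof -
    have "(z has_real_derivative ((real n + 1) / real n * z t * (real n - 1 + y t) - (real n + (z t)\<^sup>2) * z t)) (at t)"
      using ode_z[of t] that at[OF that] by simp
    moreover have "(real n + 1) / real n * z t * (real n - 1 + y t) - (real n + (z t)\<^sup>2) * z t = z t * r t"
      by (simp add: r_def algebra_simps)
    ultimately show ?thesis by simp
  qed
  have dw: "(w has_real_derivative (a t - b t * w t)) (at t)" if "t \<ge> 1" for t
  proof -
    have t0: "t > 0" using that by simp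
    have zp: "z t > 0" and yp: "y t > 0" using pos[of t] t0 by auto
    have "((\<lambda>t. y t / (z t)\<^sup>2) has_real_derivative
        ((((z t)\<^sup>2 * (real n + 1 - y t) - real n * y t) * (z t)\<^sup>2 - y t * (2 * z t * (z t * r t))) / ((z t)\<^sup>2 * (z t)\<^sup>2))) (at t)"
      using dy[OF t0] dz[OF t0] zp
      by (auto intro!: derivative_eq_intros simp: power2_eq_square)
    moreover have "(((z t)\<^sup>2 * (real n + 1 - y t) - real n * y t) * (z t)\<^sup>2 - y t * (2 * z t * (z t * r t))) / ((z t)\<^sup>2 * (z t)\<^sup>2)
        = a t - b t * w t"
      using zp by (simp add: a_def b_def w_def field_simps power2_eq_square)
    ultimately show ?thesis by (simp add: w_def[abs_def])
  qed
  have al: "(a \<longlongrightarrow> real n + 1) at_top"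
  proof -
    have "((\<lambda>t. real n + 1 - y t) \<longlongrightarrow> real n + 1 - 0) at_top" by (intro tendsto_intros y0)
    thus ?thesis by (simp add: a_def[abs_def])
  qed
  have bl: "(b \<longlongrightarrow> real n - 2 / real n) at_top"
  proof -
    have lim: "((\<lambda>t. real n + 2 * ((real n + 1) / real n * (real n - 1 + y t) - (real n + (z t)\<^sup>2)))
        \<longlongrightarrow> real n + 2 * ((real n + 1) / real n * (real n - 1 + 0) - (real n + 0\<^sup>2))) at_top"
      by (intro tendsto_intros y0 z0)
    have eq: "real n + 2 * ((real n + 1) / real n * (real n - 1 + 0) - (real n + 0\<^sup>2)) = real n - 2 / real n"
      using nr by (simp add: field_simps power2_eq_square)
    have bb: "b = (\<lambda>t. real n + 2 * ((real n + 1) / real n * (real n - 1 + y t) - (real n + (z t)\<^sup>2)))"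
      by (rule ext) (simp add: b_def r_def)
    show ?thesis using lim unfolding eq bb .
  qed
  have bpos: "real n - 2 / real n > 0"
  proof -
    have "2 / real n \<le> 1" using nr by simp
    thus ?thesis using nr by linarith
  qed
  have wl: "(w \<longlongrightarrow> (real n + 1) / (real n - 2 / real n)) at_top"
    by (rule lin_ode_limit[OF dw al bl bpos])
  have pos2: "(real n + 1) / (real n - 2 / real n) > 0" using bpos nr by simp
  have "((\<lambda>t. sqrt (inverse (w t))) \<longlongrightarrow> sqrt (inverse ((real n + 1) / (real n - 2 / real n)))) at_top"
    using pos2 by (intro tendsto_intros wl) linarith
  moreover have "sqrt (inverse ((real n + 1) / (real n - 2 / real n))) = sqrt ((real n ^ 2 - 2) / (real n * (real n + 1)))"
    using nr by (simp add: field_simps power2_eq_square)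
  moreover have "\<forall>\<^sub>F t in at_top. sqrt (inverse (w t)) = z t / sqrt (y t)"
    unfolding eventually_at_top_linorder
  proof (intro exI[of _ 1] allI impI)
    fix t :: real assume "t \<ge> 1"
    hence zp: "z t > 0" and yp: "y t > 0" using pos[of t] by auto
    have "inverse (w t) = (z t / sqrt (y t))\<^sup>2" using yp by (simp add: w_def power_divide)
    thus "sqrt (inverse (w t)) = z t / sqrt (y t)" using zp yp by simp
  qed
  ultimately show ?thesis by (auto elim: Lim_transform_eventually)
qed


lemma slg_sum: assumes "finite K" "\<And>k. k \<in> K \<Longrightarrow> f k \<in> slg n"
  shows "(\<lambda>a b. \<Sum>k\<in>K. c k * f k a b) \<in> slg n"
proof -
  have s: "supp n (f k)" if "k \<in> K" for k using assms(2)[OF that] by (rule slg_supp)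
  have t: "mtrace n (f k) = 0" if "k \<in> K" for k using assms(2)[OF that] by (simp add: slg_def)
  have "supp n (\<lambda>a b. \<Sum>k\<in>K. c k * f k a b)" using s by (auto simp: supp_def intro!: sum.neutral)
  moreover have "mtrace n (\<lambda>a b. \<Sum>k\<in>K. c k * f k a b) = (\<Sum>k\<in>K. c k * mtrace n (f k))"
    by (simp add: mtrace_def sum_distrib_left) (rule sum.swap)
  ultimately show ?thesis using t by (simp add: slg_iff)
qed

lemma minner_sum1: "minner n (\<lambda>a b. \<Sum>k\<in>K. c k * f k a b) Y = (\<Sum>k\<in>K. c k * minner n (f k) Y)"
proof -
  have "minner n (\<lambda>a b. \<Sum>k\<in>K. c k * f k a b) Y = (\<Sum>a\<le>n. \<Sum>b\<le>n. \<Sum>k\<in>K. c k * f k a b * cnj (Y a b))"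
    by (simp add: minner_def sum_distrib_right)
  also have "\<dots> = (\<Sum>a\<le>n. \<Sum>k\<in>K. \<Sum>b\<le>n. c k * f k a b * cnj (Y a b))"
    by (rule sum.cong[OF refl]) (rule sum.swap)
  also have "\<dots> = (\<Sum>k\<in>K. \<Sum>a\<le>n. \<Sum>b\<le>n. c k * f k a b * cnj (Y a b))"
    by (rule sum.swap)
  also have "\<dots> = (\<Sum>k\<in>K. c k * minner n (f k) Y)"
    by (simp add: minner_def sum_distrib_left mult.assoc)
  finally show ?thesis .
qed

lemma minner_sum2: "minner n Y (\<lambda>a b. \<Sum>k\<in>K. c k * f k a b) = (\<Sum>k\<in>K. cnj (c k) * minner n Y (f k))"
proof -
  have "minner n Y (\<lambda>a b. \<Sum>k\<in>K. c k * f k a b) = cnj (minner n (\<lambda>a b. \<Sum>k\<in>K. c k * f k a b) Y)"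
    by (simp add: minner_cnj)
  also have "\<dots> = (\<Sum>k\<in>K. cnj (c k) * minner n Y (f k))"
    by (simp add: minner_sum1 minner_cnj)
  finally show ?thesis .
qed

lemma minner_self: "minner n X X = complex_of_real (\<Sum>a\<le>n. \<Sum>b\<le>n. (cmod (X a b))\<^sup>2)"
  unfolding minner_def of_real_sum by (intro sum.cong refl complex_norm_square[symmetric])

lemma minner_self_zero: assumes "X \<in> slg n" "minner n X X = 0" shows "X = mzero"
proof (intro ext)
  fix a b
  have r: "(\<Sum>a\<le>n. \<Sum>b\<le>n. (cmod (X a b))\<^sup>2) = 0" using assms(2) by (simp only: minner_self of_real_eq_0_iff)
  show "X a b = mzero a b"
  proof (cases "a \<le> n \<and> b \<le> n")
    case True
    have "(\<Sum>b\<le>n. (cmod (X a b))\<^sup>2) = 0"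
      using r True by (subst (asm) sum_nonneg_eq_0_iff) (auto intro: sum_nonneg)
    hence "(cmod (X a b))\<^sup>2 = 0"
      using True by (subst (asm) sum_nonneg_eq_0_iff) auto
    thus ?thesis by simp
  next
    case False thus ?thesis using assms(1) by (auto simp: slg_def)
  qed
qed

lemma minner_self_real: "minner n X X = complex_of_real (Re (minner n X X))"
  by (simp add: minner_self)
lemma minner_self_nonneg: "Re (minner n X X) \<ge> 0"
  by (simp add: minner_self sum_nonneg)

definition lincomb :: "(nat \<Rightarrow> complex) \<Rightarrow> cmat list \<Rightarrow> cmat" where
  "lincomb c L = (\<lambda>a b. \<Sum>i<length L. c i * (L!i) a b)"

definition orthonormal :: "nat \<Rightarrow> cmat list \<Rightarrow> bool" where
  "orthonormal n B \<longleftrightarrow> (\<forall>i<length B. \<forall>j<length B. minner n (B!i) (B!j) = (if i = j then 1 else 0))"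

lemma slg_lincomb: "set L \<subseteq> slg n \<Longrightarrow> lincomb c L \<in> slg n"
  unfolding lincomb_def by (rule slg_sum) auto

lemma minner_lincomb1: "minner n (lincomb c L) Y = (\<Sum>i<length L. c i * minner n (L!i) Y)"
  unfolding lincomb_def by (rule minner_sum1)

lemma lincomb_append: "lincomb c (L @ [e]) = madd (lincomb c L) (msc (c (length L)) e)"
  by (intro ext) (simp add: lincomb_def nth_append)

lemma lincomb_cong: "(\<And>i. i < length L \<Longrightarrow> c i = d i) \<Longrightarrow> lincomb c L = lincomb d L"
  unfolding lincomb_def by (intro ext sum.cong) auto

lemma gram_schmidt:
  "set S \<subseteq> slg n \<Longrightarrow> \<exists>B. set B \<subseteq> slg n \<and> orthonormal n B \<and> (\<forall>v\<in>set S. \<exists>c. v = lincomb c B)"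
proof (induction S)
  case Nil
  show ?case by (rule exI[of _ "[]"]) (simp add: orthonormal_def)
next
  case (Cons v S)
  then obtain B where B: "set B \<subseteq> slg n" "orthonormal n B" "\<forall>u\<in>set S. \<exists>c. u = lincomb c B" by auto
  have v: "v \<in> slg n" using Cons.prems by auto
  define cv where "cv j = minner n v (B!j)" for j
  define w where "w = mdiff v (lincomb cv B)"
  have w: "w \<in> slg n" unfolding w_def by (intro slg_mdiff v slg_lincomb B(1))
  have orth: "minner n w (B!k) = 0" if k: "k < length B" for k
  proof -
    have "minner n (lincomb cv B) (B!k) = (\<Sum>i<length B. cv i * (if i = k then 1 else 0))"
      unfolding minner_lincomb1 using B(2) k by (intro sum.cong) (auto simp: orthonormal_def)
    also have "\<dots> = cv k" using k by (simp add: if_distrib cong: if_cong)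
    finally show ?thesis by (simp add: w_def minner_mdiff1 cv_def)
  qed
  show ?case
  proof (cases "w = mzero")
    case True
    have "v = lincomb cv B"
      by (intro ext) (use True in \<open>simp add: w_def mdiff_def mzero_def fun_eq_iff\<close>)
    thus ?thesis using B by auto
  next
    case False
    define N where "N = Re (minner n w w)"
    have wwN: "minner n w w = complex_of_real N" unfolding N_def by (rule minner_self_real)
    have Nne: "N \<noteq> 0" using False minner_self_zero[OF w] wwN by auto
    have Npos: "N > 0" using Nne minner_self_nonneg[of n w] by (simp add: N_def)
    define e where "e = msc (complex_of_real (1 / sqrt N)) w"
    have e: "e \<in> slg n" unfolding e_def by (rule slg_msc[OF w])
    have eB: "minner n e (B!k) = 0" if "k < length B" for k
      using orth[OF that] by (simp add: e_def minner_msc1)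
    have ee: "minner n e e = 1"
    proof -
      have "minner n e e = complex_of_real (1 / sqrt N) * complex_of_real (1 / sqrt N) * complex_of_real N"
        by (simp add: e_def minner_msc1 minner_msc2 wwN)
      also have "\<dots> = 1" using Npos
        by (simp flip: of_real_mult add: field_simps)
      finally show ?thesis .
    qed
    define B' where "B' = B @ [e]"
    have on: "orthonormal n B'"
      unfolding orthonormal_def
    proof (intro allI impI)
      fix i j assume ij: "i < length B'" "j < length B'"
      show "minner n (B'!i) (B'!j) = (if i = j then 1 else 0)"
      proof (cases "i < length B"; cases "j < length B")
        assume "i < length B" "j < length B"
        thus ?thesis using B(2) by (simp add: B'_def nth_append orthonormal_def)
      next
        assume a: "i < length B" "\<not> j < length B"
        hence "j = length B" using ij by (simp add: B'_def)
        thus ?thesis using a eB[of i] minner_cnj[of n e "B!i"] by (simp add: B'_def nth_append)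
      next
        assume a: "\<not> i < length B" "j < length B"
        hence "i = length B" using ij by (simp add: B'_def)
        thus ?thesis using a eB[of j] by (simp add: B'_def nth_append)
      next
        assume a: "\<not> i < length B" "\<not> j < length B"
        hence "i = length B" "j = length B" using ij by (auto simp: B'_def)
        thus ?thesis using ee by (simp add: B'_def nth_append)
      qed
    qed
    have sp: "\<exists>c. u = lincomb c B'" if uin: "u \<in> set (v # S)" for u
    proof (cases "u = v")
      case True
      define c where "c i = (if i < length B then cv i else complex_of_real (sqrt N))" for i
      have c1: "lincomb c B = lincomb cv B" by (rule lincomb_cong) (simp add: c_def)
      have "lincomb c B' = madd (lincomb cv B) (msc (complex_of_real (sqrt N)) e)"
        unfolding B'_def lincomb_append c1 by (simp add: c_def)
      also have "\<dots> = v"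
      proof (intro ext)
        fix a b
        have "complex_of_real (sqrt N) * (complex_of_real (1 / sqrt N) * w a b) = w a b"
          using Npos by (simp flip: of_real_mult)
        thus "madd (lincomb cv B) (msc (complex_of_real (sqrt N)) e) a b = v a b"
          by (simp add: e_def w_def)
      qed
      finally show ?thesis using True by metis
    next
      case False
      then obtain c where c: "u = lincomb c B" using uin B(3) by auto
      define c' where "c' i = (if i < length B then c i else 0)" for i
      have c1: "lincomb c' B = lincomb c B" by (rule lincomb_cong) (simp add: c'_def)
      have "lincomb c' B' = lincomb c B"
        unfolding B'_def lincomb_append c1 by (simp add: c'_def)
      thus ?thesis using c by metis
    qed
    show ?thesis using B(1) e on sp by (intro exI[of _ B']) (auto simp: B'_def)
  qed
qed


definition Em :: "nat \<Rightarrow> nat \<Rightarrow> cmat" where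
  "Em a b = (\<lambda>i j. if i = a \<and> j = b then 1 else 0)"
definition Idm :: "nat \<Rightarrow> cmat" where
  "Idm n = (\<lambda>i j. if i = j \<and> i \<le> n then 1 else 0)"
definition projm :: "nat \<Rightarrow> cmat \<Rightarrow> cmat" where
  "projm n M = mdiff M (msc (mtrace n M / of_nat (n + 1)) (Idm n))"

lemma trace_Idm: "mtrace n (Idm n) = of_nat (n + 1)"
  by (simp add: mtrace_def Idm_def)

lemma slg_projm: assumes "supp n M" shows "projm n M \<in> slg n"
proof -
  have "supp n (projm n M)" using assms by (auto simp: supp_def projm_def Idm_def)
  moreover have "mtrace n (projm n M) = 0"
  proof -
    have "mtrace n (projm n M) = mtrace n M - mtrace n M / of_nat (n + 1) * mtrace n (Idm n)"
      by (simp add: projm_def mtrace_def sum_subtractf sum_distrib_left)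
    also have "\<dots> = 0" unfolding trace_Idm by (simp del: of_nat_Suc)
    finally show ?thesis .
  qed
  ultimately show ?thesis by (simp add: slg_iff)
qed

lemma supp_Em: "a \<le> n \<Longrightarrow> b \<le> n \<Longrightarrow> supp n (Em a b)"
  by (auto simp: supp_def Em_def)

lemma trace_Em: "a \<le> n \<Longrightarrow> mtrace n (Em a b) = (if a = b then 1 else 0)"
  by (cases "a = b") (auto simp: mtrace_def Em_def intro!: sum.neutral)

lemma expand_projm: assumes X: "X \<in> slg n"
  shows "X i j = (\<Sum>a\<le>n. \<Sum>b\<le>n. X a b * projm n (Em a b) i j)"
proof -
  have "(\<Sum>a\<le>n. \<Sum>b\<le>n. X a b * projm n (Em a b) i j)
      = (\<Sum>a\<le>n. \<Sum>b\<le>n. X a b * Em a b i j) - Idm n i j / of_nat (n+1) * (\<Sum>a\<le>n. \<Sum>b\<le>n. X a b * mtrace n (Em a b))"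
    by (simp add: projm_def sum_subtractf sum_distrib_left algebra_simps)
  also have "(\<Sum>a\<le>n. \<Sum>b\<le>n. X a b * mtrace n (Em a b)) = (\<Sum>a\<le>n. X a a)"
  proof (rule sum.cong[OF refl])
    fix a assume "a \<in> {..n}"
    hence "(\<Sum>b\<le>n. X a b * mtrace n (Em a b)) = (\<Sum>b\<le>n. if b = a then X a a else 0)"
      by (intro sum.cong) (auto simp: trace_Em)
    also have "\<dots> = X a a" using \<open>a \<in> {..n}\<close> by simp
    finally show "(\<Sum>b\<le>n. X a b * mtrace n (Em a b)) = X a a" .
  qed
  also have "(\<Sum>a\<le>n. X a a) = 0" using X by (simp add: slg_def mtrace_def)
  also have "(\<Sum>a\<le>n. \<Sum>b\<le>n. X a b * Em a b i j) = X i j"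
  proof (cases "i \<le> n \<and> j \<le> n")
    case True
    have "(\<Sum>a\<le>n. \<Sum>b\<le>n. X a b * Em a b i j) = (\<Sum>a\<le>n. if a = i then X i j else 0)"
    proof (rule sum.cong[OF refl])
      fix a assume "a \<in> {..n}"
      have "(\<Sum>b\<le>n. X a b * Em a b i j) = (\<Sum>b\<le>n. if b = j then (if a = i then X i j else 0) else 0)"
        by (intro sum.cong) (auto simp: Em_def)
      also have "\<dots> = (if a = i then X i j else 0)" using True by simp
      finally show "(\<Sum>b\<le>n. X a b * Em a b i j) = (if a = i then X i j else 0)" .
    qed
    also have "\<dots> = X i j" using True by simp
    finally show ?thesis .
  next
    case False
    hence "X i j = 0" using X by (auto simp: slg_def)
    moreover have "(\<Sum>a\<le>n. \<Sum>b\<le>n. X a b * Em a b i j) = 0"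
      using False by (intro sum.neutral ballI) (auto simp: Em_def)
    ultimately show ?thesis by simp
  qed
  finally show ?thesis by simp
qed

lemma unitary_basis_exists: "\<exists>B. unitary_basis n B"
proof -
  define A where "A = (\<lambda>(a,b). projm n (Em a b)) ` ({..n} \<times> {..n})"
  have "finite A" by (simp add: A_def)
  then obtain S where S: "set S = A" using finite_list by blast
  have "set S \<subseteq> slg n" unfolding S A_def by (auto intro!: slg_projm supp_Em)
  then obtain B where B: "set B \<subseteq> slg n" "orthonormal n B" "\<forall>v\<in>set S. \<exists>c. v = lincomb c B"
    using gram_schmidt by blast
  have ex: "\<exists>c. projm n (Em a b) = lincomb c B" if ab: "a \<le> n" "b \<le> n" for a b
  proof -
    have "projm n (Em a b) \<in> set S" unfolding S A_def using ab by force
    thus ?thesis using B(3) by blast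
  qed
  define d where "d a b = (SOME c. projm n (Em a b) = lincomb c B)" for a b
  have d: "projm n (Em a b) = lincomb (d a b) B" if "a \<le> n" "b \<le> n" for a b
    unfolding d_def by (rule someI_ex[OF ex[OF that]])
  have sp: "\<exists>c. X = (\<lambda>a b. \<Sum>i<length B. c i * (B!i) a b)" if X: "X \<in> slg n" for X
  proof (intro exI ext)
    fix i j
    have "X i j = (\<Sum>a\<le>n. \<Sum>b\<le>n. X a b * lincomb (d a b) B i j)"
      using expand_projm[OF X, of i j] d by simp
    also have "\<dots> = (\<Sum>a\<le>n. \<Sum>b\<le>n. \<Sum>k<length B. X a b * d a b k * (B!k) i j)"
      by (simp add: lincomb_def sum_distrib_left mult.assoc)
    also have "\<dots> = (\<Sum>a\<le>n. \<Sum>k<length B. \<Sum>b\<le>n. X a b * d a b k * (B!k) i j)"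
      by (rule sum.cong[OF refl]) (rule sum.swap)
    also have "\<dots> = (\<Sum>k<length B. \<Sum>a\<le>n. \<Sum>b\<le>n. X a b * d a b k * (B!k) i j)"
      by (rule sum.swap)
    also have "\<dots> = (\<Sum>k<length B. (\<Sum>a\<le>n. \<Sum>b\<le>n. X a b * d a b k) * (B!k) i j)"
      by (simp add: sum_distrib_right)
    finally show "X i j = (\<Sum>k<length B. (\<Sum>a\<le>n. \<Sum>b\<le>n. X a b * d a b k) * (B!k) i j)" .
  qed
  show ?thesis using B(1,2) sp by (intro exI[of _ B]) (auto simp: unitary_basis_def orthonormal_def)
qed


definition Pprop :: "nat \<Rightarrow> (cmat \<Rightarrow> cmat \<Rightarrow> cmat) \<Rightarrow> cmat list \<Rightarrow> (cmat \<Rightarrow> cmat) \<Rightarrow> bool" where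
  "Pprop n \<mu> B P \<longleftrightarrow> lin_endo n P
       \<and> (\<forall>X. X \<notin> slg n \<longrightarrow> P X = mzero)
       \<and> (\<forall>X\<in>slg n. \<forall>Y\<in>slg n. minner n (P X) Y = minner n X (P Y))
       \<and> (\<forall>X\<in>slg n. minner n (P X) X =
            complex_of_real (\<Sum>j<length B. \<Sum>i<j. (cmod (minner n (\<mu> (B!i) (B!j)) X))\<^sup>2))"

lemma P_op_alt: "P_op n \<mu> = (THE P. Pprop n \<mu> (SOME B. unitary_basis n B) P)"
  by (simp add: P_op_def Pprop_def Let_def)

lemma polar_zero:
  assumes R: "lin_endo n R" and q: "\<And>X. X \<in> slg n \<Longrightarrow> minner n (R X) X = 0"
    and X: "X \<in> slg n"
  shows "R X = mzero"
proof -
  have lin1: "R (madd U V) = madd (R U) (R V)" if "U \<in> slg n" "V \<in> slg n" for U V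
    using R that by (simp add: lin_endo_def)
  have lin2: "R (msc c U) = msc c (R U)" if "U \<in> slg n" for U c
    using R that by (simp add: lin_endo_def)
  have cl: "R U \<in> slg n" if "U \<in> slg n" for U using R that by (simp add: lin_endo_def)
  have key: "minner n (R X) Y = 0" if Y: "Y \<in> slg n" for Y
  proof -
    have 1: "minner n (R X) Y + minner n (R Y) X = 0"
    proof -
      have "minner n (R (madd X Y)) (madd X Y) = 0" using q slg_madd[OF X Y] by simp
      thus ?thesis using q[OF X] q[OF Y] by (simp add: lin1[OF X Y] minner_madd1 minner_madd2) (simp add: add.commute)
    qed
    have 2: "- \<i> * minner n (R X) Y + \<i> * minner n (R Y) X = 0"
    proof -
      have iY: "msc \<i> Y \<in> slg n" by (rule slg_msc[OF Y])
      have "minner n (R (madd X (msc \<i> Y))) (madd X (msc \<i> Y)) = 0" using q slg_madd[OF X iY] by simp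
      thus ?thesis using q[OF X] q[OF Y]
        by (simp add: lin1[OF X iY] lin2[OF Y] minner_madd1 minner_madd2 minner_msc1 minner_msc2 algebra_simps)
    qed
    from 1 2 show ?thesis by (simp add: algebra_simps)
  qed
  show ?thesis using minner_self_zero[OF cl[OF X] key[OF cl[OF X]]] .
qed

lemma Pprop_unique: assumes "Pprop n \<mu> B P" "Pprop n \<mu> B P'" shows "P = P'"
proof (rule ext)
  fix X
  show "P X = P' X"
  proof (cases "X \<in> slg n")
    case False thus ?thesis using assms by (simp add: Pprop_def)
  next
    case True
    define R where "R U = mdiff (P U) (P' U)" for U
    have lin: "lin_endo n R" using assms unfolding Pprop_def lin_endo_def R_def
      by (auto intro!: slg_mdiff ext simp: algebra_simps)
    have h1: "\<forall>X\<in>slg n. minner n (P X) X =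
            complex_of_real (\<Sum>j<length B. \<Sum>i<j. (cmod (minner n (\<mu> (B!i) (B!j)) X))\<^sup>2)"
      using assms(1) unfolding Pprop_def by blast
    have h2: "\<forall>X\<in>slg n. minner n (P' X) X =
            complex_of_real (\<Sum>j<length B. \<Sum>i<j. (cmod (minner n (\<mu> (B!i) (B!j)) X))\<^sup>2)"
      using assms(2) unfolding Pprop_def by blast
    have "R X = mzero"
    proof (rule polar_zero[OF lin _ True])
      fix U assume U: "U \<in> slg n"
      show "minner n (R U) U = 0" unfolding R_def minner_mdiff1 h1[rule_format, OF U] h2[rule_format, OF U] by simp
    qed
    thus ?thesis by (simp add: R_def fun_eq_iff)
  qed
qed

definition Qop :: "nat \<Rightarrow> (cmat \<Rightarrow> cmat \<Rightarrow> cmat) \<Rightarrow> cmat list \<Rightarrow> cmat \<Rightarrow> cmat" where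
  "Qop n \<mu> B X = (if X \<in> slg n then
     (\<lambda>a b. \<Sum>p\<in>Sigma {..<length B} lessThan. minner n X (\<mu> (B!snd p) (B!fst p)) * \<mu> (B!snd p) (B!fst p) a b)
     else mzero)"

lemma sum_pairs: "(\<Sum>j<(m::nat). \<Sum>i<j. f i j) = (\<Sum>p\<in>Sigma {..<m} lessThan. f (snd p) (fst p))"
proof -
  have "(\<Sum>j<m. \<Sum>i<j. f i j) = (\<Sum>(j,i)\<in>Sigma {..<m} lessThan. f i j)" by (rule sum.Sigma) auto
  thus ?thesis by (simp add: case_prod_beta)
qed

lemma Qop_Pprop:
  assumes B: "set B \<subseteq> slg n" and cl: "\<And>U V. U \<in> slg n \<Longrightarrow> V \<in> slg n \<Longrightarrow> \<mu> U V \<in> slg n"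
  shows "Pprop n \<mu> B (Qop n \<mu> B)"
proof -
  let ?K = "Sigma {..<length B} lessThan"
  let ?m = "\<lambda>p. \<mu> (B!snd p) (B!fst p)"
  have fin: "finite ?K" by auto
  have mK: "?m p \<in> slg n" if "p \<in> ?K" for p
    using that B by (intro cl) (auto simp: subset_code(1))
  have Q: "Qop n \<mu> B X = (\<lambda>a b. \<Sum>p\<in>?K. minner n X (?m p) * ?m p a b)" if "X \<in> slg n" for X
    using that by (simp add: Qop_def)
  have lin: "lin_endo n (Qop n \<mu> B)"
    unfolding lin_endo_def
  proof (intro conjI ballI allI)
    fix X assume X: "X \<in> slg n"
    show "Qop n \<mu> B X \<in> slg n" unfolding Q[OF X] by (rule slg_sum[OF fin mK])
  next
    fix X Y assume X: "X \<in> slg n" and Y: "Y \<in> slg n"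
    show "Qop n \<mu> B (madd X Y) = madd (Qop n \<mu> B X) (Qop n \<mu> B Y)"
      unfolding Q[OF X] Q[OF Y] Q[OF slg_madd[OF X Y]]
      by (intro ext) (simp add: minner_madd1 sum.distrib[symmetric] algebra_simps)
  next
    fix X c assume X: "X \<in> slg n"
    show "Qop n \<mu> B (msc c X) = msc c (Qop n \<mu> B X)"
      unfolding Q[OF X] Q[OF slg_msc[OF X]]
      by (intro ext) (simp add: minner_msc1 sum_distrib_left algebra_simps)
  qed
  have herm: "minner n (Qop n \<mu> B X) Y = minner n X (Qop n \<mu> B Y)" if X: "X \<in> slg n" and Y: "Y \<in> slg n" for X Y
    unfolding Q[OF X] Q[OF Y] minner_sum1 minner_sum2
    by (intro sum.cong refl) (simp add: minner_cnj mult.commute)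
  have quad: "minner n (Qop n \<mu> B X) X =
      complex_of_real (\<Sum>j<length B. \<Sum>i<j. (cmod (minner n (\<mu> (B!i) (B!j)) X))\<^sup>2)" if X: "X \<in> slg n" for X
  proof -
    have "minner n (Qop n \<mu> B X) X = (\<Sum>p\<in>?K. minner n X (?m p) * minner n (?m p) X)"
      unfolding Q[OF X] minner_sum1 ..
    also have "\<dots> = (\<Sum>p\<in>?K. complex_of_real ((cmod (minner n (?m p) X))\<^sup>2))"
    proof (intro sum.cong refl)
      fix p
      have "minner n X (?m p) = cnj (minner n (?m p) X)" by (simp add: minner_cnj)
      thus "minner n X (?m p) * minner n (?m p) X = complex_of_real ((cmod (minner n (?m p) X))\<^sup>2)"
        unfolding complex_norm_square by (simp add: mult.commute)
    qed
    also have "\<dots> = complex_of_real (\<Sum>j<length B. \<Sum>i<j. (cmod (minner n (\<mu> (B!i) (B!j)) X))\<^sup>2)"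
      unfolding sum_pairs of_real_sum ..
    finally show ?thesis .
  qed
  show ?thesis unfolding Pprop_def using lin herm quad by (simp add: Qop_def)
qed

definition theB :: "nat \<Rightarrow> cmat list" where
  "theB n = (SOME B. unitary_basis n B)"

lemma theB: "unitary_basis n (theB n)"
  unfolding theB_def using unitary_basis_exists by (rule someI_ex)

lemma P_op_Qop:
  assumes cl: "\<And>U V. U \<in> slg n \<Longrightarrow> V \<in> slg n \<Longrightarrow> \<mu> U V \<in> slg n"
  shows "P_op n \<mu> = Qop n \<mu> (theB n)"
proof -
  have B: "set (theB n) \<subseteq> slg n" using theB by (simp add: unitary_basis_def)
  have q: "Pprop n \<mu> (theB n) (Qop n \<mu> (theB n))" by (rule Qop_Pprop) (use B cl in auto)
  have "(THE P. Pprop n \<mu> (theB n) P) = Qop n \<mu> (theB n)"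
    by (rule the_equality[where P="Pprop n \<mu> (theB n)", OF q]) (rule Pprop_unique[OF _ q])
  thus ?thesis by (simp add: P_op_alt theB_def)
qed

lemma P_op_unique:
  assumes "Pprop n \<mu> (theB n) P" shows "P_op n \<mu> = P"
proof -
  have "(THE P. Pprop n \<mu> (theB n) P) = P"
    by (rule the_equality[where P="Pprop n \<mu> (theB n)", OF assms]) (rule Pprop_unique[OF _ assms])
  thus ?thesis by (simp add: P_op_alt theB_def)
qed


lemma comm_mdiff1: "comm n (mdiff A B) C = mdiff (comm n A C) (comm n B C)"
  by (rule ext, rule ext) (simp add: comm_def sum_subtractf[symmetric] algebra_simps)
lemma comm_mdiff2: "comm n C (mdiff A B) = mdiff (comm n C A) (comm n C B)"
  by (rule ext, rule ext) (simp add: comm_def sum_subtractf[symmetric] algebra_simps)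

lemma Em_minner: "a \<le> n \<Longrightarrow> b \<le> n \<Longrightarrow> minner n (Em a b) Y = cnj (Y a b)"
proof -
  assume ab: "a \<le> n" "b \<le> n"
  have "minner n (Em a b) Y = (\<Sum>i\<le>n. if i = a then cnj (Y a b) else 0)"
    unfolding minner_def
  proof (intro sum.cong refl)
    fix i assume "i \<in> {..n}"
    have "(\<Sum>j\<le>n. Em a b i j * cnj (Y i j)) = (\<Sum>j\<le>n. if j = b then (if i = a then cnj (Y a b) else 0) else 0)"
      by (intro sum.cong refl) (auto simp: Em_def)
    also have "\<dots> = (if i = a then cnj (Y a b) else 0)" using ab by simp
    finally show "(\<Sum>j\<le>n. Em a b i j * cnj (Y i j)) = (if i = a then cnj (Y a b) else 0)" .
  qed
  also have "\<dots> = cnj (Y a b)" using ab by simp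
  finally show ?thesis .
qed

lemma sty_Em: "(a < n \<and> b = n) \<or> (a = n \<and> b < n) \<Longrightarrow> sty n (Em a b)"
  by (auto simp: sty_def Em_def)

lemma prS_Em: "prS n (Em a b) = (if (a < n \<and> b = n) \<or> (a = n \<and> b < n) then Em a b else mzero)"
  by (intro ext) (auto simp: prS_def Em_def)

lemma prCI_Em: assumes "a \<le> n" "b \<le> n"
  shows "prCI n (Em a b) = msc (if a = b then Iden n a a else 0) (Iden n)"
proof -
  have "minner n (Em a b) (Iden n) = cnj (Iden n a b)" by (rule Em_minner[OF assms])
  also have "\<dots> = (if a = b then Iden n a a else 0)" using assms by (simp add: Iden_app)
  finally show ?thesis by (simp add: prCI_def)
qed

lemma prSL_Em_L: assumes "a < n" "b < n"
  shows "prSL n (Em a b) = mdiff (Em a b) (msc (if a = b then sI n else 0) (Iden n))"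
  using assms by (intro ext) (simp add: prSL_def prCI_Em prS_Em Iden_app)

lemma prSL_Em_S: "(a < n \<and> b = n) \<or> (a = n \<and> b < n) \<Longrightarrow> prSL n (Em a b) = mzero"
  by (rule sty_prSL[OF sty_Em])

lemma ofn1_ne0: "(of_nat n + 1 :: complex) \<noteq> 0"
proof -
  have e: "(of_nat n + 1 :: complex) = of_nat (Suc n)" by simp
  show ?thesis unfolding e of_nat_eq_0_iff by simp
qed

lemma sIsI: assumes n: "n \<ge> 1" shows "sI n * (sI n * x) = x / (of_nat n * (of_nat n + 1))"
proof -
  have c: "(of_nat n * (of_nat n + 1) :: complex) \<noteq> 0" using n ofn1_ne0[of n] by simp
  have "sI n * sI n = 1 / (of_nat n * (of_nat n + 1))"
    by (subst nonzero_eq_divide_eq[OF c]) (rule sI_sq[OF n])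
  hence "sI n * sI n * x = x / (of_nat n * (of_nat n + 1))" by simp
  thus ?thesis by (simp add: mult.assoc)
qed

lemma prSL_Em_NN: assumes n: "n \<ge> 1" shows "prSL n (Em n n) = msc (1 / of_nat (n+1)) (Idm n)"
proof (intro ext)
  fix i j
  have sq: "sI n * sI n * (of_nat n * (of_nat n + 1)) = 1" using sI_sq[OF n] .
  have c1: "(of_nat n + 1 :: complex) \<noteq> 0"
  proof -
    have e: "(of_nat n + 1 :: complex) = of_nat (Suc n)" by simp
    show ?thesis unfolding e of_nat_eq_0_iff by simp
  qed
  have c: "(of_nat n * (of_nat n + 1) :: complex) \<noteq> 0" using n c1 by simp
  have sq2: "sI n * sI n = 1 / (of_nat n * (of_nat n + 1))"
    by (subst nonzero_eq_divide_eq[OF c]) (rule sq)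
  have e: "prSL n (Em n n) = mdiff (mdiff (Em n n) (msc (Iden n n n) (Iden n))) mzero"
    by (simp add: prSL_def prCI_Em prS_Em)
  show "prSL n (Em n n) i j = msc (1 / of_nat (n+1)) (Idm n) i j"
  proof -
    have nz: "(of_nat n :: complex) \<noteq> 0" using n by simp
    have e1: "(of_nat n :: complex) / (of_nat n * (of_nat n + 1)) = 1 / (of_nat n + 1)"
      using nz c1 by simp
    have e2: "1 - (of_nat n :: complex) * of_nat n / (of_nat n * (of_nat n + 1)) = 1 / (of_nat n + 1)"
      using nz c1 by (simp add: divide_simps)
    consider "i = j \<and> i < n" | "i = j \<and> i = n" | "\<not> (i = j \<and> i \<le> n)" by linarith
    thus ?thesis
    proof cases
      case 1
      have "prSL n (Em n n) i j = - (sI n * - of_nat n) * sI n"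
        unfolding e using 1 by (simp add: Iden_app Em_def)
      also have "\<dots> = sI n * (sI n * of_nat n)" by (simp add: algebra_simps)
      also have "\<dots> = 1 / (of_nat n + 1)" unfolding sIsI[OF n] e1 ..
      finally show ?thesis using 1 by (simp add: Idm_def)
    next
      case 2
      have "prSL n (Em n n) i j = 1 - (sI n * - of_nat n) * (sI n * - of_nat n)"
        unfolding e using 2 by (simp add: Iden_app Em_def)
      also have "\<dots> = 1 - sI n * (sI n * (of_nat n * of_nat n))" by (simp add: algebra_simps)
      also have "\<dots> = 1 / (of_nat n + 1)" unfolding sIsI[OF n] e2 ..
      finally show ?thesis using 2 by (simp add: Idm_def)
    next
      case 3
      thus ?thesis unfolding e by (auto simp: Iden_app Em_def Idm_def)
    qed
  qed
qed

lemma comm_Em_Em: assumes "b \<le> n" "d \<le> n"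
  shows "comm n (Em a b) (Em c d) = mdiff (msc (if b = c then 1 else 0) (Em a d)) (msc (if d = a then 1 else 0) (Em c b))"
proof (intro ext)
  fix i j
  have 1: "(\<Sum>e\<le>n. Em a b i e * Em c d e j) = (if b = c then Em a d i j else 0)"
  proof -
    have "(\<Sum>e\<le>n. Em a b i e * Em c d e j) = (\<Sum>e\<le>n. if e = b then (if b = c then Em a d i j else 0) else 0)"
      by (intro sum.cong refl) (auto simp: Em_def)
    thus ?thesis using assms by simp
  qed
  have 2: "(\<Sum>e\<le>n. Em c d i e * Em a b e j) = (if d = a then Em c b i j else 0)"
  proof -
    have "(\<Sum>e\<le>n. Em c d i e * Em a b e j) = (\<Sum>e\<le>n. if e = d then (if d = a then Em c b i j else 0) else 0)"
      by (intro sum.cong refl) (auto simp: Em_def)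
    thus ?thesis using assms by simp
  qed
  show "comm n (Em a b) (Em c d) i j = mdiff (msc (if b = c then 1 else 0) (Em a d)) (msc (if d = a then 1 else 0) (Em c b)) i j"
    unfolding comm_app sum_subtractf 1 2 by simp
qed

lemma comm_Em_Iden: assumes "a \<le> n" "b \<le> n"
  shows "comm n (Em a b) (Iden n) = msc (Iden n b b - Iden n a a) (Em a b)"
proof (intro ext)
  fix i j
  have 1: "(\<Sum>e\<le>n. Em a b i e * Iden n e j) = (if i = a \<and> j = b then Iden n b b else 0)"
  proof -
    have "(\<Sum>e\<le>n. Em a b i e * Iden n e j) = (\<Sum>e\<le>n. if e = b then (if i = a \<and> j = b then Iden n b b else 0) else 0)"
      by (intro sum.cong refl) (auto simp: Em_def Iden_app)
    thus ?thesis using assms by simp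
  qed
  have 2: "(\<Sum>e\<le>n. Iden n i e * Em a b e j) = (if i = a \<and> j = b then Iden n a a else 0)"
  proof -
    have "(\<Sum>e\<le>n. Iden n i e * Em a b e j) = (\<Sum>e\<le>n. if e = a then (if i = a \<and> j = b then Iden n a a else 0) else 0)"
      by (intro sum.cong refl) (auto simp: Em_def Iden_app)
    thus ?thesis using assms by simp
  qed
  show "comm n (Em a b) (Iden n) i j = msc (Iden n b b - Iden n a a) (Em a b) i j"
    unfolding comm_app sum_subtractf 1 2 by (simp add: Em_def algebra_simps)
qed

lemma comm_Iden_Em: assumes "a \<le> n" "b \<le> n"
  shows "comm n (Iden n) (Em a b) = msc (Iden n a a - Iden n b b) (Em a b)"
  by (subst comm_anti) (intro ext, simp add: comm_Em_Iden[OF assms] algebra_simps)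

lemma comm_Idm1: "supp n M \<Longrightarrow> comm n (Idm n) M = mzero"
proof (intro ext)
  fix i j assume M: "supp n M"
  have 1: "(\<Sum>e\<le>n. Idm n i e * M e j) = (if i \<le> n then M i j else 0)"
  proof -
    have "(\<Sum>e\<le>n. Idm n i e * M e j) = (\<Sum>e\<le>n. if e = i then M i j else 0)"
      by (intro sum.cong refl) (auto simp: Idm_def)
    thus ?thesis by simp
  qed
  have 2: "(\<Sum>e\<le>n. M i e * Idm n e j) = (if j \<le> n then M i j else 0)"
  proof -
    have "(\<Sum>e\<le>n. M i e * Idm n e j) = (\<Sum>e\<le>n. if e = j then M i j else 0)"
      by (intro sum.cong refl) (auto simp: Idm_def)
    thus ?thesis by simp
  qed
  show "comm n (Idm n) M i j = mzero i j"
    unfolding comm_app sum_subtractf 1 2 using M by (auto simp: supp_def)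
qed

lemma comm_Idm2: "supp n M \<Longrightarrow> comm n M (Idm n) = mzero"
  by (subst comm_anti) (simp add: comm_Idm1)


lemma sI_coef: assumes n: "n \<ge> 1" shows "sI n * (sI n * (1 + of_nat n)) = 1 / of_nat n"
proof -
  have nz: "(of_nat n :: complex) \<noteq> 0" using n by simp
  have "sI n * (sI n * (1 + of_nat n)) = (of_nat n + 1) / (of_nat n * (of_nat n + 1))"
    unfolding sIsI[OF n] by (simp add: add.commute)
  also have "\<dots> = 1 / of_nat n" using nz ofn1_ne0[of n] by simp
  finally show ?thesis .
qed

lemma sc1: assumes n: "n \<ge> 1" shows "sI n * ((sI n + sI n * of_nat n) * x) = x / of_nat n"
proof -
  have "sI n * ((sI n + sI n * of_nat n) * x) = (sI n * (sI n * (1 + of_nat n))) * x" by (simp add: algebra_simps)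
  thus ?thesis unfolding sI_coef[OF n] by simp
qed
lemma sc2: assumes n: "n \<ge> 1" shows "- (sI n * ((- (sI n * of_nat n) - sI n) * x)) = x / of_nat n"
proof -
  have "- (sI n * ((- (sI n * of_nat n) - sI n) * x)) = (sI n * (sI n * (1 + of_nat n))) * x" by (simp add: algebra_simps)
  thus ?thesis unfolding sI_coef[OF n] by simp
qed

lemma mu_inf_minner: "minner n (mu_inf n U V) X =
   minner n (comm n (prSL n U) (prSL n V)) X + minner n (comm n (prSL n U) (prS n V)) X
   + minner n (comm n (prS n U) (prSL n V)) X
   + complex_of_real (sqrt ((real n ^ 2 - 2) / (real n * (real n + 1)))) * minner n (prCI n (comm n (prS n U) (prS n V))) X"
  by (simp add: mu_inf_def minner_madd1 minner_msc1 add.assoc)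

lemma minner_prCI: "minner n (prCI n M) X = minner n M (Iden n) * minner n (Iden n) X"
  by (simp add: prCI_def minner_msc1)

lemma supp_prS: "supp n (prS n M)" by (rule sty_supp[OF sty_prS])
lemma supp_prCI: "supp n (prCI n M)" by (simp add: supp_def prCI_def Iden_app)
lemma supp_prSL: "supp n M \<Longrightarrow> supp n (prSL n M)"
  using supp_prS[of n M] supp_prCI[of n M] by (simp add: supp_def prSL_def)

context
  fixes n :: nat and X :: cmat
  assumes n1: "n \<ge> 1" and X: "X \<in> slg n"
begin

abbreviation "GG a b c d \<equiv> minner n (mu_inf n (Em a b) (Em c d)) X"

lemmas Gsimps = mu_inf_minner prSL_Em_L prS_Em comm_mdiff1 comm_mdiff2 comm_msc1 comm_msc2
  comm_Em_Em comm_Em_Iden comm_Iden_Em comm_self minner_lin minner_mzero1 minner_mzero2 Em_minner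
  Iden_app msc_mzero comm_mzero1 comm_mzero2 prCI_mzero minner_prCI prSL_Em_S

lemma G_LLLL: assumes "a < n" "b < n" "c < n" "d < n"
  shows "GG a b c d = (if b = c then cnj (X a d) else 0) - (if d = a then cnj (X c b) else 0)"
  using assms by (simp add: Gsimps)

lemma G_LLC: assumes "a < n" "b < n" "c < n"
  shows "GG a b c n = (if b = c then cnj (X a n) else 0) - (if a = b then cnj (X c n) / of_nat n else 0)"
  using assms n1 by (simp add: Gsimps sc1 sc2)

lemma G_LLR: assumes "a < n" "b < n" "d < n"
  shows "GG a b n d = - ((if d = a then cnj (X n b) else 0) - (if a = b then cnj (X n d) / of_nat n else 0))"
  using assms n1 by (simp add: Gsimps sc1 sc2)

lemma G_CLL: assumes "a < n" "c < n" "d < n"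
  shows "GG a n c d = - ((if d = a then cnj (X c n) else 0) - (if c = d then cnj (X a n) / of_nat n else 0))"
  using assms n1 by (simp add: Gsimps sc1 sc2)

lemma G_RLL: assumes "b < n" "c < n" "d < n"
  shows "GG n b c d = (if b = c then cnj (X n d) else 0) - (if c = d then cnj (X n b) / of_nat n else 0)"
  using assms n1 by (simp add: Gsimps sc1 sc2)

lemma G_CR: assumes "a < n" "d < n"
  shows "GG a n n d = (if a = d then complex_of_real (sqrt ((real n ^ 2 - 2) / (real n * (real n + 1))))
      * (sI n * (1 + of_nat n)) * minner n (Iden n) X else 0)"
  using assms n1 by (simp add: Gsimps algebra_simps)

lemma G_RC: assumes "b < n" "c < n"
  shows "GG n b c n = (if b = c then - (complex_of_real (sqrt ((real n ^ 2 - 2) / (real n * (real n + 1))))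
      * (sI n * (1 + of_nat n)) * minner n (Iden n) X) else 0)"
  using assms n1 by (simp add: Gsimps algebra_simps)

lemma G_CC: assumes "a < n" "c < n" shows "GG a n c n = 0"
  using assms n1 by (simp add: Gsimps)

lemma G_RR: assumes "b < n" "d < n" shows "GG n b n d = 0"
  using assms n1 by (simp add: Gsimps)

lemma G_NNx: assumes "c \<le> n" "d \<le> n" shows "GG n n c d = 0"
proof -
  have s1: "supp n (prSL n (Em c d))" by (intro supp_prSL supp_Em assms)
  have s2: "supp n (prS n (Em c d))" by (rule supp_prS)
  have pnn: "prS n (Em n n) = mzero" by (simp add: prS_Em)
  show ?thesis
    by (simp add: mu_inf_minner prSL_Em_NN[OF n1] pnn comm_msc1 comm_Idm1[OF s1] comm_Idm1[OF s2])
qed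

lemma G_xNN: assumes "a \<le> n" "b \<le> n" shows "GG a b n n = 0"
proof -
  have s1: "supp n (prSL n (Em a b))" by (intro supp_prSL supp_Em assms)
  have s2: "supp n (prS n (Em a b))" by (rule supp_prS)
  have pnn: "prS n (Em n n) = mzero" by (simp add: prS_Em)
  show ?thesis
    by (simp add: mu_inf_minner prSL_Em_NN[OF n1] pnn comm_msc2 comm_Idm2[OF s1] comm_Idm2[OF s2])
qed

end


lemma parseval:
  assumes ub: "unitary_basis n B" and F: "F \<in> slg n"
  shows "(\<Sum>i<length B. (cmod (minner n (B!i) F))\<^sup>2) = Re (minner n F F)"
proof -
  obtain c where c: "F = (\<lambda>a b. \<Sum>i<length B. c i * (B!i) a b)" using ub F by (auto simp: unitary_basis_def)
  have on: "\<And>i j. i < length B \<Longrightarrow> j < length B \<Longrightarrow> minner n (B!i) (B!j) = (if i = j then 1 else 0)"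
    using ub by (simp add: unitary_basis_def)
  have 1: "minner n (B!i) F = cnj (c i)" if i: "i < length B" for i
  proof -
    have "minner n (B!i) F = (\<Sum>k<length B. cnj (c k) * (if i = k then 1 else 0))"
      unfolding c minner_sum2 using i on by (intro sum.cong refl) auto
    also have "\<dots> = cnj (c i)" using i by (simp add: if_distrib cong: if_cong)
    finally show ?thesis .
  qed
  have 2: "minner n F F = (\<Sum>k<length B. c k * cnj (c k))"
  proof -
    have "minner n F F = (\<Sum>k<length B. c k * minner n (B!k) F)"
      by (subst (1) c) (rule minner_sum1)
    also have "\<dots> = (\<Sum>k<length B. c k * cnj (c k))" using 1 by simp
    finally show ?thesis .
  qed
  have "(\<Sum>i<length B. (cmod (minner n (B!i) F))\<^sup>2) = (\<Sum>i<length B. (cmod (c i))\<^sup>2)"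
    using 1 by simp
  also have "\<dots> = Re (minner n F F)" unfolding 2 Re_sum
    by (intro sum.cong refl) (simp only: complex_norm_square[symmetric] Re_complex_of_real)
  finally show ?thesis .
qed

lemma expand_Em: assumes "supp n X"
  shows "X i j = (\<Sum>a\<le>n. \<Sum>b\<le>n. X a b * Em a b i j)"
proof (cases "i \<le> n \<and> j \<le> n")
  case True
  have "(\<Sum>a\<le>n. \<Sum>b\<le>n. X a b * Em a b i j) = (\<Sum>a\<le>n. if a = i then X i j else 0)"
  proof (rule sum.cong[OF refl])
    fix a assume "a \<in> {..n}"
    have "(\<Sum>b\<le>n. X a b * Em a b i j) = (\<Sum>b\<le>n. if b = j then (if a = i then X i j else 0) else 0)"
      by (intro sum.cong) (auto simp: Em_def)
    also have "\<dots> = (if a = i then X i j else 0)" using True by simp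
    finally show "(\<Sum>b\<le>n. X a b * Em a b i j) = (if a = i then X i j else 0)" .
  qed
  also have "\<dots> = X i j" using True by simp
  finally show ?thesis by simp
next
  case False
  hence "X i j = 0" using assms by (auto simp: supp_def)
  moreover have "(\<Sum>a\<le>n. \<Sum>b\<le>n. X a b * Em a b i j) = 0"
    using False by (intro sum.neutral ballI) (auto simp: Em_def)
  ultimately show ?thesis by simp
qed

lemma f_sum:
  assumes add: "\<And>A C. f (madd A C) = f A + f C" and hom: "\<And>c A. f (msc c A) = c * f A"
    and fin: "finite K"
  shows "f (\<lambda>i j. \<Sum>k\<in>K. c k * M k i j) = (\<Sum>k\<in>K. c k * f (M k))"
  using fin
proof (induction K rule: finite_induct)
  case empty
  have "f mzero = f (msc 0 mzero)" by simp
  also have "\<dots> = 0" by (simp only: hom) simp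
  finally show ?case by (simp add: mzero_def)
next
  case (insert k K)
  have "(\<lambda>i j. \<Sum>k\<in>insert k K. c k * M k i j) = madd (msc (c k) (M k)) (\<lambda>i j. \<Sum>k\<in>K. c k * M k i j)"
    using insert by (intro ext) simp
  thus ?case using insert by (simp add: add hom)
qed

lemma f_expand:
  assumes add: "\<And>A C. f (madd A C) = f A + f C" and hom: "\<And>c A. f (msc c A) = c * f A"
    and U: "supp n U"
  shows "f U = (\<Sum>a\<le>n. \<Sum>b\<le>n. U a b * f (Em a b))"
proof -
  have e: "U = (\<lambda>i j. \<Sum>p\<in>{..n} \<times> {..n}. U (fst p) (snd p) * Em (fst p) (snd p) i j)"
    by (intro ext, rule trans[OF expand_Em[OF U]]) (simp add: sum.cartesian_product case_prod_beta)
  have "f U = f (\<lambda>i j. \<Sum>p\<in>{..n} \<times> {..n}. U (fst p) (snd p) * Em (fst p) (snd p) i j)"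
    by (rule arg_cong[of _ _ f, OF e])
  also have "\<dots> = (\<Sum>p\<in>{..n} \<times> {..n}. U (fst p) (snd p) * f (Em (fst p) (snd p)))"
    by (rule f_sum[OF add hom]) simp
  also have "\<dots> = (\<Sum>a\<le>n. \<Sum>b\<le>n. U a b * f (Em a b))"
    by (simp add: sum.cartesian_product case_prod_beta)
  finally show ?thesis .
qed


lemma Klemma:
  assumes ub: "unitary_basis n B"
    and add: "\<And>A C. f (madd A C) = f A + f C" and hom: "\<And>c A. f (msc c A) = c * f A"
    and fId: "f (Idm n) = 0"
  shows "(\<Sum>i<length B. (cmod (f (B!i)))\<^sup>2) = (\<Sum>a\<le>n. \<Sum>b\<le>n. (cmod (f (Em a b)))\<^sup>2)"
proof -
  define F where "F = (\<lambda>a b. if a \<le> n \<and> b \<le> n then cnj (f (Em a b)) else 0)"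
  have fF: "f U = minner n U F" if U: "supp n U" for U
    unfolding f_expand[OF add hom U] minner_def F_def by simp
  have suppF: "supp n F" by (simp add: supp_def F_def)
  have suppI: "supp n (Idm n)" by (simp add: supp_def Idm_def)
  have "minner n (Idm n) F = (\<Sum>a\<le>n. cnj (F a a))"
    unfolding minner_def
  proof (intro sum.cong refl)
    fix a assume a: "a \<in> {..n}"
    have "(\<Sum>b\<le>n. Idm n a b * cnj (F a b)) = (\<Sum>b\<le>n. if b = a then cnj (F a a) else 0)"
      using a by (intro sum.cong refl) (auto simp: Idm_def)
    also have "\<dots> = cnj (F a a)" using a by simp
    finally show "(\<Sum>b\<le>n. Idm n a b * cnj (F a b)) = cnj (F a a)" .
  qed
  hence "cnj (mtrace n F) = 0" using fF[OF suppI] fId by (simp add: mtrace_def cnj_sum)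
  hence trF: "mtrace n F = 0" by simp
  have F: "F \<in> slg n" using suppF trF by (simp add: slg_iff)
  have Bs: "supp n (B!i)" if "i < length B" for i
    using ub that by (intro slg_supp) (auto simp: unitary_basis_def)
  have "(\<Sum>i<length B. (cmod (f (B!i)))\<^sup>2) = (\<Sum>i<length B. (cmod (minner n (B!i) F))\<^sup>2)"
    using fF Bs by simp
  also have "\<dots> = Re (minner n F F)" by (rule parseval[OF ub F])
  also have "\<dots> = (\<Sum>a\<le>n. \<Sum>b\<le>n. (cmod (F a b))\<^sup>2)" by (simp add: minner_self)
  also have "\<dots> = (\<Sum>a\<le>n. \<Sum>b\<le>n. (cmod (f (Em a b)))\<^sup>2)" by (simp add: F_def)
  finally show ?thesis .
qed


lemma cmod_diff_sq: "(cmod (x - y))\<^sup>2 = (cmod x)\<^sup>2 + (cmod y)\<^sup>2 - 2 * Re (x * cnj y)"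
  unfolding cmod_power2 by (simp add: power2_eq_square algebra_simps)

lemma if0_simps:
  "cmod (if P then x else 0) = (if P then cmod x else 0)"
  "(if P then (r::real) else 0)\<^sup>2 = (if P then r\<^sup>2 else 0)"
  "(if P then x else 0) * cnj (if Q then y else 0) = (if P \<and> Q then x * cnj y else 0)"
  "Re (if P then x else 0) = (if P then Re x else 0)"
  "(- (if P then x else 0)) = (if P then - x else 0)"
  "(if P then x else 0) / c = (if P then x / c else 0)"
  by auto

lemma sum_if_indep: "(\<Sum>c\<in>A. if P then f c else 0) = (if P then sum f A else 0)"
  by auto

lemma SC1: fixes u :: "nat \<Rightarrow> complex" and n :: nat assumes n: "n \<ge> 1"
  shows "(\<Sum>a<n. \<Sum>b<n. \<Sum>c<n. (cmod ((if b = c then u a else 0) - (if a = b then u c / of_nat n else 0)))\<^sup>2)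
     = (real n - 1 / real n) * (\<Sum>a<n. (cmod (u a))\<^sup>2)"
proof -
  have "(\<Sum>a<n. \<Sum>b<n. \<Sum>c<n. (cmod ((if b = c then u a else 0) - (if a = b then u c / of_nat n else 0)))\<^sup>2)
    = (\<Sum>a<n. \<Sum>b<n. \<Sum>c<n. ((if b = c then (cmod (u a))\<^sup>2 else 0) + (if a = b then (cmod (u c))\<^sup>2 / (real n)^2 else 0)
          - (if b = c \<and> a = b then 2 * (cmod (u a))\<^sup>2 / real n else 0)))"
    apply (intro sum.cong refl)
    apply (simp only: cmod_diff_sq if0_simps)
    apply (auto simp: norm_divide power_divide complex_norm_square[symmetric])
    done
  also have "\<dots> = (\<Sum>a<n. \<Sum>b<n. ((cmod (u a))\<^sup>2 + (if a = b then (\<Sum>c<n. (cmod (u c))\<^sup>2) / (real n)^2 else 0)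
          - (if a = b then 2 * (cmod (u a))\<^sup>2 / real n else 0)))"
    apply (intro sum.cong refl)
    apply (simp add: sum.distrib sum_subtractf sum_if_indep conj_commute sum_divide_distrib)
    done
  also have "\<dots> = (\<Sum>a<n. real n * (cmod (u a))\<^sup>2 + (\<Sum>c<n. (cmod (u c))\<^sup>2) / (real n)^2 - 2 * (cmod (u a))\<^sup>2 / real n)"
    by (simp add: sum.distrib sum_subtractf)
  also have "\<dots> = (real n - 1 / real n) * (\<Sum>a<n. (cmod (u a))\<^sup>2)"
    using n by (simp add: sum.distrib sum_subtractf sum_distrib_left[symmetric] sum_divide_distrib[symmetric] field_simps power2_eq_square)
  finally show ?thesis .
qed

lemma SC2: fixes v :: "nat \<Rightarrow> complex" and n :: nat assumes n: "n \<ge> 1"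
  shows "(\<Sum>a<n. \<Sum>b<n. \<Sum>d<n. (cmod ((if d = a then v b else 0) - (if a = b then v d / of_nat n else 0)))\<^sup>2)
     = (real n - 1 / real n) * (\<Sum>a<n. (cmod (v a))\<^sup>2)"
proof -
  have "(\<Sum>a<n. \<Sum>b<n. \<Sum>d<n. (cmod ((if d = a then v b else 0) - (if a = b then v d / of_nat n else 0)))\<^sup>2)
      = (\<Sum>b<n. \<Sum>a<n. \<Sum>d<n. (cmod ((if d = a then v b else 0) - (if a = b then v d / of_nat n else 0)))\<^sup>2)"
    by (rule sum.swap)
  also have "\<dots> = (\<Sum>b<n. \<Sum>a<n. \<Sum>d<n. (cmod ((if a = d then v b else 0) - (if b = a then v d / of_nat n else 0)))\<^sup>2)"
    by (intro sum.cong refl) auto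
  also have "\<dots> = (real n - 1 / real n) * (\<Sum>a<n. (cmod (v a))\<^sup>2)" by (rule SC1[OF n])
  finally show ?thesis .
qed

lemma SC3: fixes u :: "nat \<Rightarrow> complex" and n :: nat assumes n: "n \<ge> 1"
  shows "(\<Sum>a<n. \<Sum>c<n. \<Sum>d<n. (cmod ((if d = a then u c else 0) - (if c = d then u a / of_nat n else 0)))\<^sup>2)
     = (real n - 1 / real n) * (\<Sum>a<n. (cmod (u a))\<^sup>2)"
proof -
  have "(\<Sum>a<n. \<Sum>c<n. \<Sum>d<n. (cmod ((if d = a then u c else 0) - (if c = d then u a / of_nat n else 0)))\<^sup>2)
      = (\<Sum>c<n. \<Sum>a<n. \<Sum>d<n. (cmod ((if d = a then u c else 0) - (if c = d then u a / of_nat n else 0)))\<^sup>2)"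
    by (rule sum.swap)
  also have "\<dots> = (\<Sum>c<n. \<Sum>d<n. \<Sum>a<n. (cmod ((if d = a then u c else 0) - (if c = d then u a / of_nat n else 0)))\<^sup>2)"
    by (rule sum.cong[OF refl]) (rule sum.swap)
  also have "\<dots> = (real n - 1 / real n) * (\<Sum>a<n. (cmod (u a))\<^sup>2)" by (rule SC1[OF n])
  finally show ?thesis .
qed

lemma SC4: fixes v :: "nat \<Rightarrow> complex" and n :: nat assumes n: "n \<ge> 1"
  shows "(\<Sum>b<n. \<Sum>c<n. \<Sum>d<n. (cmod ((if b = c then v d else 0) - (if c = d then v b / of_nat n else 0)))\<^sup>2)
     = (real n - 1 / real n) * (\<Sum>a<n. (cmod (v a))\<^sup>2)"
proof -
  have "(\<Sum>b<n. \<Sum>c<n. \<Sum>d<n. (cmod ((if b = c then v d else 0) - (if c = d then v b / of_nat n else 0)))\<^sup>2)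
      = (\<Sum>b<n. \<Sum>d<n. \<Sum>c<n. (cmod ((if b = c then v d else 0) - (if c = d then v b / of_nat n else 0)))\<^sup>2)"
    by (rule sum.cong[OF refl]) (rule sum.swap)
  also have "\<dots> = (\<Sum>d<n. \<Sum>b<n. \<Sum>c<n. (cmod ((if b = c then v d else 0) - (if c = d then v b / of_nat n else 0)))\<^sup>2)"
    by (rule sum.swap)
  also have "\<dots> = (\<Sum>d<n. \<Sum>c<n. \<Sum>b<n. (cmod ((if b = c then v d else 0) - (if c = d then v b / of_nat n else 0)))\<^sup>2)"
    by (rule sum.cong[OF refl]) (rule sum.swap)
  also have "\<dots> = (\<Sum>d<n. \<Sum>c<n. \<Sum>b<n. (cmod ((if c = b then v d else 0) - (if d = c then v b / of_nat n else 0)))\<^sup>2)"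
    by (intro sum.cong refl) auto
  also have "\<dots> = (real n - 1 / real n) * (\<Sum>a<n. (cmod (v a))\<^sup>2)" by (rule SC1[OF n])
  finally show ?thesis .
qed

lemma if_0_conj: "(if P \<and> Q then x else 0) = (if P then if Q then x else 0 else 0)" by auto

lemma SLL: fixes A :: "nat \<Rightarrow> nat \<Rightarrow> complex" and n :: nat
  shows "(\<Sum>a<n. \<Sum>b<n. \<Sum>c<n. \<Sum>d<n. (cmod ((if b = c then A a d else 0) - (if d = a then A c b else 0)))\<^sup>2)
     = 2 * real n * (\<Sum>a<n. \<Sum>d<n. (cmod (A a d))\<^sup>2) - 2 * (cmod (\<Sum>a<n. A a a))\<^sup>2"
proof -
  have "(\<Sum>a<n. \<Sum>b<n. \<Sum>c<n. \<Sum>d<n. (cmod ((if b = c then A a d else 0) - (if d = a then A c b else 0)))\<^sup>2)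
    = (\<Sum>a<n. \<Sum>b<n. \<Sum>c<n. \<Sum>d<n. ((if b = c then (cmod (A a d))\<^sup>2 else 0) + (if d = a then (cmod (A c b))\<^sup>2 else 0)
          - (if b = c then if d = a then 2 * Re (A a a * cnj (A b b)) else 0 else 0)))"
    apply (intro sum.cong refl)
    apply (simp only: cmod_diff_sq if0_simps)
    apply auto
    done
  also have "\<dots> = (\<Sum>a<n. \<Sum>b<n. ((\<Sum>d<n. (cmod (A a d))\<^sup>2) + (\<Sum>c<n. (cmod (A c b))\<^sup>2) - 2 * Re (A a a * cnj (A b b))))"
    apply (intro sum.cong refl)
    apply (simp only: sum.distrib sum_subtractf sum_if_indep)
    apply simp
    done
  also have "\<dots> = real n * (\<Sum>a<n. \<Sum>d<n. (cmod (A a d))\<^sup>2) + real n * (\<Sum>b<n. \<Sum>c<n. (cmod (A c b))\<^sup>2)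
      - 2 * (\<Sum>a<n. \<Sum>b<n. Re (A a a * cnj (A b b)))"
    by (simp add: sum.distrib sum_subtractf sum_distrib_left)
  also have "(\<Sum>b<n. \<Sum>c<n. (cmod (A c b))\<^sup>2) = (\<Sum>a<n. \<Sum>d<n. (cmod (A a d))\<^sup>2)"
    by (rule sum.swap)
  also have "(\<Sum>a<n. \<Sum>b<n. Re (A a a * cnj (A b b))) = Re (\<Sum>a<n. A a a * (\<Sum>b<n. cnj (A b b)))"
    by (simp only: Re_sum sum_distrib_left)
  also have "\<dots> = Re ((\<Sum>a<n. A a a) * cnj (\<Sum>b<n. A b b))"
    by (simp only: sum_distrib_right cnj_sum)
  also have "Re ((\<Sum>a<n. A a a) * cnj (\<Sum>b<n. A b b)) = (cmod (\<Sum>a<n. A a a))\<^sup>2"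
    by (simp only: complex_norm_square[symmetric] Re_complex_of_real)
  finally show ?thesis by simp
qed

lemma SD: fixes K :: complex and n :: nat
  shows "(\<Sum>a<n. \<Sum>d<n. (cmod (if a = d then K else 0))\<^sup>2) = real n * (cmod K)\<^sup>2"
  by (simp add: if0_simps)


lemma mu_inf_madd1: "mu_inf n (madd U U') V = madd (mu_inf n U V) (mu_inf n U' V)"
  by (intro ext) (simp add: mu_inf_def lin_simps algebra_simps)
lemma mu_inf_msc1: "mu_inf n (msc c U) V = msc c (mu_inf n U V)"
  by (intro ext) (simp add: mu_inf_def lin_simps algebra_simps)
lemma mu_inf_madd2: "mu_inf n V (madd U U') = madd (mu_inf n V U) (mu_inf n V U')"
  by (intro ext) (simp add: mu_inf_def lin_simps algebra_simps)
lemma mu_inf_msc2: "mu_inf n V (msc c U) = msc c (mu_inf n V U)"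
  by (intro ext) (simp add: mu_inf_def lin_simps algebra_simps)
lemma mu_inf_anti: "mu_inf n V U = msc (-1) (mu_inf n U V)"
proof -
  have e: "\<And>A B. comm n A B = msc (-1) (comm n B A)" by (rule comm_anti)
  show ?thesis
    by (intro ext) (simp add: mu_inf_def e[of "prSL n V"] e[of "prS n V"] prCI_msc algebra_simps)
qed

lemma prSL_Idm: "prSL n (Idm n) = Idm n"
proof -
  have "minner n (Idm n) (Iden n) = 0" by (simp add: minner_I Idm_def)
  hence "prCI n (Idm n) = mzero" by (simp add: prCI_def)
  moreover have "prS n (Idm n) = mzero" by (intro ext) (simp add: prS_def Idm_def)
  ultimately show ?thesis by (intro ext) (simp add: prSL_def)
qed
lemma prS_Idm: "prS n (Idm n) = mzero" by (intro ext) (simp add: prS_def Idm_def)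

lemma mu_inf_Idm1: "supp n V \<Longrightarrow> mu_inf n (Idm n) V = mzero"
  by (simp add: mu_inf_def prSL_Idm prS_Idm comm_Idm1 supp_prSL supp_prS)
lemma mu_inf_Idm2: "supp n U \<Longrightarrow> mu_inf n U (Idm n) = mzero"
  by (simp add: mu_inf_def prSL_Idm prS_Idm comm_Idm2 supp_prSL supp_prS)

lemma half_sum: fixes h :: "nat \<Rightarrow> nat \<Rightarrow> real"
  assumes sym: "\<And>i j. h i j = h j i" and diag: "\<And>i. h i i = 0"
  shows "(\<Sum>j<m. \<Sum>i<j. h i j) = (\<Sum>i<m. \<Sum>j<m. h i j) / 2"
proof (induction m)
  case 0 thus ?case by simp
next
  case (Suc m)
  have "(\<Sum>i<Suc m. \<Sum>j<Suc m. h i j) = (\<Sum>i<m. \<Sum>j<m. h i j) + (\<Sum>i<m. h i m) + (\<Sum>j<m. h m j) + h m m"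
    by (simp add: sum.distrib)
  also have "(\<Sum>j<m. h m j) = (\<Sum>i<m. h i m)" using sym by simp
  finally have "(\<Sum>i<Suc m. \<Sum>j<Suc m. h i j) = (\<Sum>i<m. \<Sum>j<m. h i j) + 2 * (\<Sum>i<m. h i m)"
    using diag by simp
  thus ?case using Suc by simp
qed

lemma split4: "(\<Sum>a\<le>(n::nat). \<Sum>b\<le>n. \<Sum>c\<le>n. \<Sum>d\<le>n. h a b c d) =
  (\<Sum>a<n. \<Sum>b<n. \<Sum>c<n. \<Sum>d<n. h a b c d) + (\<Sum>a<n. \<Sum>b<n. \<Sum>c<n. h a b c n) + (\<Sum>a<n. \<Sum>b<n. \<Sum>d<n. h a b n d) + (\<Sum>a<n. \<Sum>b<n. h a b n n)
 + (\<Sum>a<n. \<Sum>c<n. \<Sum>d<n. h a n c d) + (\<Sum>a<n. \<Sum>c<n. h a n c n) + (\<Sum>a<n. \<Sum>d<n. h a n n d) + (\<Sum>a<n. h a n n n)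
 + (\<Sum>b<n. \<Sum>c<n. \<Sum>d<n. h n b c d) + (\<Sum>b<n. \<Sum>c<n. h n b c n) + (\<Sum>b<n. \<Sum>d<n. h n b n d) + (\<Sum>b<n. h n b n n)
 + (\<Sum>c<n. \<Sum>d<n. h n n c d) + (\<Sum>c<n. h n n c n) + (\<Sum>d<n. h n n n d) + (h n n n n :: real)"
  by (simp add: sum_atMost_split sum.distrib algebra_simps)

lemma split2: "(\<Sum>a\<le>(n::nat). \<Sum>b\<le>n. h a b) = (\<Sum>a<n. \<Sum>b<n. h a b) + (\<Sum>a<n. h a n) + (\<Sum>b<n. h n b) + (h n n :: real)"
  by (simp add: sum_atMost_split sum.distrib algebra_simps)


definition KC :: "nat \<Rightarrow> cmat \<Rightarrow> complex" where
  "KC n X = complex_of_real (sqrt ((real n ^ 2 - 2) / (real n * (real n + 1))))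
      * (sI n * (1 + of_nat n)) * minner n (Iden n) X"

context
  fixes n :: nat and X :: cmat
  assumes n2: "n \<ge> 2" and X: "X \<in> slg n"
begin

lemma n1: "n \<ge> 1" using n2 by simp

lemma total_sum:
  "(\<Sum>a\<le>n. \<Sum>b\<le>n. \<Sum>c\<le>n. \<Sum>d\<le>n. (cmod (minner n (mu_inf n (Em a b) (Em c d)) X))\<^sup>2)
   = 2 * real n * (\<Sum>a<n. \<Sum>d<n. (cmod (X a d))\<^sup>2) - 2 * (cmod (X n n))\<^sup>2
     + 2 * (real n - 1 / real n) * ((\<Sum>a<n. (cmod (X a n))\<^sup>2) + (\<Sum>b<n. (cmod (X n b))\<^sup>2))
     + 2 * real n * (cmod (KC n X))\<^sup>2"
proof -
  let ?h = "\<lambda>a b c d. (cmod (minner n (mu_inf n (Em a b) (Em c d)) X))\<^sup>2"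
  note G = G_LLLL[OF n1 X] G_LLC[OF n1 X] G_LLR[OF n1 X] G_CLL[OF n1 X] G_RLL[OF n1 X]
    G_CR[OF n1 X] G_RC[OF n1 X] G_CC[OF n1 X] G_RR[OF n1 X] G_NNx[OF n1 X] G_xNN[OF n1 X]
  have tr: "(\<Sum>a<n. X a a) = - X n n" using X trace_split[of n X] by (simp add: slg_def eq_neg_iff_add_eq_0)
  have T1: "(\<Sum>a<n. \<Sum>b<n. \<Sum>c<n. \<Sum>d<n. ?h a b c d) = 2 * real n * (\<Sum>a<n. \<Sum>d<n. (cmod (X a d))\<^sup>2) - 2 * (cmod (X n n))\<^sup>2"
  proof -
    have "(\<Sum>a<n. \<Sum>b<n. \<Sum>c<n. \<Sum>d<n. ?h a b c d) = (\<Sum>a<n. \<Sum>b<n. \<Sum>c<n. \<Sum>d<n.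
        (cmod ((if b = c then cnj (X a d) else 0) - (if d = a then cnj (X c b) else 0)))\<^sup>2)"
      by (intro sum.cong refl) (simp add: G)
    also have "\<dots> = 2 * real n * (\<Sum>a<n. \<Sum>d<n. (cmod (cnj (X a d)))\<^sup>2) - 2 * (cmod (\<Sum>a<n. cnj (X a a)))\<^sup>2"
      by (rule SLL)
    also have "(\<Sum>a<n. cnj (X a a)) = cnj (- X n n)" unfolding tr[symmetric] by (simp add: cnj_sum)
    finally show ?thesis by simp
  qed
  have T2: "(\<Sum>a<n. \<Sum>b<n. \<Sum>c<n. ?h a b c n) = (real n - 1 / real n) * (\<Sum>a<n. (cmod (X a n))\<^sup>2)"
  proof -
    have "(\<Sum>a<n. \<Sum>b<n. \<Sum>c<n. ?h a b c n) = (\<Sum>a<n. \<Sum>b<n. \<Sum>c<n.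
        (cmod ((if b = c then cnj (X a n) else 0) - (if a = b then cnj (X c n) / of_nat n else 0)))\<^sup>2)"
      by (intro sum.cong refl) (simp add: G)
    also have "\<dots> = (real n - 1 / real n) * (\<Sum>a<n. (cmod (cnj (X a n)))\<^sup>2)" by (rule SC1[OF n1])
    finally show ?thesis by simp
  qed
  have T3: "(\<Sum>a<n. \<Sum>b<n. \<Sum>d<n. ?h a b n d) = (real n - 1 / real n) * (\<Sum>a<n. (cmod (X n a))\<^sup>2)"
  proof -
    have "(\<Sum>a<n. \<Sum>b<n. \<Sum>d<n. ?h a b n d) = (\<Sum>a<n. \<Sum>b<n. \<Sum>d<n.
        (cmod ((if d = a then cnj (X n b) else 0) - (if a = b then cnj (X n d) / of_nat n else 0)))\<^sup>2)"
      by (intro sum.cong refl) (simp only: G lessThan_iff norm_minus_cancel)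
    also have "\<dots> = (real n - 1 / real n) * (\<Sum>a<n. (cmod (cnj (X n a)))\<^sup>2)" by (rule SC2[OF n1])
    finally show ?thesis by simp
  qed
  have T5: "(\<Sum>a<n. \<Sum>c<n. \<Sum>d<n. ?h a n c d) = (real n - 1 / real n) * (\<Sum>a<n. (cmod (X a n))\<^sup>2)"
  proof -
    have "(\<Sum>a<n. \<Sum>c<n. \<Sum>d<n. ?h a n c d) = (\<Sum>a<n. \<Sum>c<n. \<Sum>d<n.
        (cmod ((if d = a then cnj (X c n) else 0) - (if c = d then cnj (X a n) / of_nat n else 0)))\<^sup>2)"
      by (intro sum.cong refl) (simp only: G lessThan_iff norm_minus_cancel)
    also have "\<dots> = (real n - 1 / real n) * (\<Sum>a<n. (cmod (cnj (X a n)))\<^sup>2)" by (rule SC3[OF n1])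
    finally show ?thesis by simp
  qed
  have T9: "(\<Sum>b<n. \<Sum>c<n. \<Sum>d<n. ?h n b c d) = (real n - 1 / real n) * (\<Sum>a<n. (cmod (X n a))\<^sup>2)"
  proof -
    have "(\<Sum>b<n. \<Sum>c<n. \<Sum>d<n. ?h n b c d) = (\<Sum>b<n. \<Sum>c<n. \<Sum>d<n.
        (cmod ((if b = c then cnj (X n d) else 0) - (if c = d then cnj (X n b) / of_nat n else 0)))\<^sup>2)"
      by (intro sum.cong refl) (simp add: G)
    also have "\<dots> = (real n - 1 / real n) * (\<Sum>a<n. (cmod (cnj (X n a)))\<^sup>2)" by (rule SC4[OF n1])
    finally show ?thesis by simp
  qed
  have T7: "(\<Sum>a<n. \<Sum>d<n. ?h a n n d) = real n * (cmod (KC n X))\<^sup>2"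
  proof -
    have "(\<Sum>a<n. \<Sum>d<n. ?h a n n d) = (\<Sum>a<n. \<Sum>d<n. (cmod (if a = d then KC n X else 0))\<^sup>2)"
      by (intro sum.cong refl) (simp add: G KC_def)
    also have "\<dots> = real n * (cmod (KC n X))\<^sup>2" by (rule SD)
    finally show ?thesis .
  qed
  have T10: "(\<Sum>b<n. \<Sum>c<n. ?h n b c n) = real n * (cmod (KC n X))\<^sup>2"
  proof -
    have "(\<Sum>b<n. \<Sum>c<n. ?h n b c n) = (\<Sum>b<n. \<Sum>c<n. (cmod (if b = c then KC n X else 0))\<^sup>2)"
      by (intro sum.cong refl) (simp add: G KC_def)
    also have "\<dots> = real n * (cmod (KC n X))\<^sup>2" by (rule SD)
    finally show ?thesis .
  qed
  have Z: "(\<Sum>a<n. \<Sum>b<n. ?h a b n n) = 0" "(\<Sum>a<n. \<Sum>c<n. ?h a n c n) = 0" "(\<Sum>a<n. ?h a n n n) = 0"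
    "(\<Sum>b<n. \<Sum>d<n. ?h n b n d) = 0" "(\<Sum>b<n. ?h n b n n) = 0" "(\<Sum>c<n. \<Sum>d<n. ?h n n c d) = 0"
    "(\<Sum>c<n. ?h n n c n) = 0" "(\<Sum>d<n. ?h n n n d) = 0" "?h n n n n = 0"
    by (simp_all add: G)
  show ?thesis unfolding split4[of ?h n] T1 T2 T3 T5 T7 T9 T10 Z by (simp add: algebra_simps)
qed

end


context
  fixes n :: nat and X :: cmat
  assumes n2: "n \<ge> 2" and X: "X \<in> slg n"
begin

lemma n1': "n \<ge> 1" using n2 by simp

lemma quad_sum:
  assumes ub: "unitary_basis n B"
  shows "(\<Sum>j<length B. \<Sum>i<j. (cmod (minner n (mu_inf n (B!i) (B!j)) X))\<^sup>2)
   = (\<Sum>a\<le>n. \<Sum>b\<le>n. \<Sum>c\<le>n. \<Sum>d\<le>n. (cmod (minner n (mu_inf n (Em a b) (Em c d)) X))\<^sup>2) / 2"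
proof -
  define g where "g U V = minner n (mu_inf n U V) X" for U V
  define m where "m = length B"
  have Bs: "supp n (B!i)" if "i < length B" for i
    using ub that by (intro slg_supp) (auto simp: unitary_basis_def)
  have Es: "supp n (Em c d)" if "c \<le> n" "d \<le> n" for c d using that by (rule supp_Em)
  have gsym: "cmod (g V U) = cmod (g U V)" for U V
    unfolding g_def by (subst mu_inf_anti) (simp add: minner_msc1)
  have gdiag: "g U U = 0" for U
  proof -
    have "g U U = - g U U" by (subst (2) g_def, subst mu_inf_anti) (simp add: g_def minner_msc1)
    thus ?thesis by simp
  qed
  have K1: "(\<Sum>j<m. (cmod (g U (B!j)))\<^sup>2) = (\<Sum>c\<le>n. \<Sum>d\<le>n. (cmod (g U (Em c d)))\<^sup>2)" if U: "supp n U" for U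
    unfolding m_def
    by (rule Klemma[OF ub, of "\<lambda>V. g U V"])
       (simp_all add: g_def mu_inf_madd2 mu_inf_msc2 minner_madd1 minner_msc1 mu_inf_Idm2[OF U])
  have K2: "(\<Sum>i<m. (cmod (g (B!i) V))\<^sup>2) = (\<Sum>a\<le>n. \<Sum>b\<le>n. (cmod (g (Em a b) V))\<^sup>2)" if V: "supp n V" for V
    unfolding m_def
    by (rule Klemma[OF ub, of "\<lambda>U. g U V"])
       (simp_all add: g_def mu_inf_madd1 mu_inf_msc1 minner_madd1 minner_msc1 mu_inf_Idm1[OF V])
  have "(\<Sum>j<m. \<Sum>i<j. (cmod (g (B!i) (B!j)))\<^sup>2) = (\<Sum>i<m. \<Sum>j<m. (cmod (g (B!i) (B!j)))\<^sup>2) / 2"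
    by (rule half_sum) (simp_all add: gsym gdiag)
  also have "(\<Sum>i<m. \<Sum>j<m. (cmod (g (B!i) (B!j)))\<^sup>2) = (\<Sum>i<m. \<Sum>c\<le>n. \<Sum>d\<le>n. (cmod (g (B!i) (Em c d)))\<^sup>2)"
    by (intro sum.cong refl K1 Bs) (simp add: m_def)
  also have "\<dots> = (\<Sum>c\<le>n. \<Sum>i<m. \<Sum>d\<le>n. (cmod (g (B!i) (Em c d)))\<^sup>2)" by (rule sum.swap)
  also have "\<dots> = (\<Sum>c\<le>n. \<Sum>d\<le>n. \<Sum>i<m. (cmod (g (B!i) (Em c d)))\<^sup>2)" by (rule sum.cong[OF refl]) (rule sum.swap)
  also have "\<dots> = (\<Sum>c\<le>n. \<Sum>d\<le>n. \<Sum>a\<le>n. \<Sum>b\<le>n. (cmod (g (Em a b) (Em c d)))\<^sup>2)"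
    by (intro sum.cong refl K2 Es) auto
  also have "\<dots> = (\<Sum>c\<le>n. \<Sum>a\<le>n. \<Sum>d\<le>n. \<Sum>b\<le>n. (cmod (g (Em a b) (Em c d)))\<^sup>2)"
    by (rule sum.cong[OF refl]) (rule sum.swap)
  also have "\<dots> = (\<Sum>c\<le>n. \<Sum>a\<le>n. \<Sum>b\<le>n. \<Sum>d\<le>n. (cmod (g (Em a b) (Em c d)))\<^sup>2)"
    by (rule sum.cong[OF refl], rule sum.cong[OF refl]) (rule sum.swap)
  also have "\<dots> = (\<Sum>a\<le>n. \<Sum>c\<le>n. \<Sum>b\<le>n. \<Sum>d\<le>n. (cmod (g (Em a b) (Em c d)))\<^sup>2)" by (rule sum.swap)
  also have "\<dots> = (\<Sum>a\<le>n. \<Sum>b\<le>n. \<Sum>c\<le>n. \<Sum>d\<le>n. (cmod (g (Em a b) (Em c d)))\<^sup>2)"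
    by (rule sum.cong[OF refl]) (rule sum.swap)
  finally show ?thesis by (simp add: g_def m_def)
qed

end


definition Top :: "nat \<Rightarrow> cmat \<Rightarrow> cmat" where
  "Top n X = (if X \<in> slg n then mdiff (msc (of_nat n) X) (msc (1 / of_nat n) (Dder n X)) else mzero)"

lemma slg_Dder: "Dder n X \<in> slg n"
  by (simp add: Dder_def slg_madd slg_msc slg_prCI slg_prS)
lemma Dder_madd: "Dder n (madd X Y) = madd (Dder n X) (Dder n Y)"
  by (intro ext) (simp add: Dder_def prCI_madd prS_madd algebra_simps)
lemma Dder_msc: "Dder n (msc c X) = msc c (Dder n X)"
  by (intro ext) (simp add: Dder_def prCI_msc prS_msc algebra_simps)
lemma lin_Dder: "lin_endo n (Dder n)"
  by (simp add: lin_endo_def slg_Dder Dder_madd Dder_msc)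

lemma prCI_adj: "minner n (prCI n X) Y = minner n X (prCI n Y)"
proof -
  have "minner n (prCI n X) Y = minner n X (Iden n) * minner n (Iden n) Y" by (simp add: prCI_def minner_msc1)
  also have "\<dots> = minner n X (Iden n) * cnj (minner n Y (Iden n))" by (simp add: minner_cnj)
  also have "\<dots> = minner n X (prCI n Y)" by (simp add: prCI_def minner_msc2 mult.commute)
  finally show ?thesis .
qed

lemma prS_adj: "minner n (prS n X) Y = minner n (prS n X) (prS n Y)"
  unfolding minner_def by (intro sum.cong refl) (simp add: prS_def)
lemma prS_adj3: "minner n (prS n X) Y = minner n X (prS n Y)"
  unfolding minner_def by (intro sum.cong refl) (simp add: prS_def)

lemma Dder_adj: "minner n (Dder n X) Y = minner n X (Dder n Y)"
  by (simp add: Dder_def minner_madd1 minner_madd2 minner_msc1 minner_msc2 prCI_adj prS_adj3)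

lemma lin_Top: "lin_endo n (Top n)"
  unfolding lin_endo_def
proof (intro conjI ballI allI)
  fix X assume X: "X \<in> slg n"
  show "Top n X \<in> slg n" using X by (simp add: Top_def slg_mdiff slg_msc slg_Dder)
next
  fix X Y assume X: "X \<in> slg n" and Y: "Y \<in> slg n"
  show "Top n (madd X Y) = madd (Top n X) (Top n Y)"
    using X Y slg_madd[OF X Y] by (intro ext) (simp add: Top_def Dder_madd algebra_simps)
next
  fix X c assume X: "X \<in> slg n"
  show "Top n (msc c X) = msc c (Top n X)"
    using X slg_msc[OF X] by (intro ext) (simp add: Top_def Dder_msc algebra_simps)
qed

lemma Top_herm: "X \<in> slg n \<Longrightarrow> Y \<in> slg n \<Longrightarrow> minner n (Top n X) Y = minner n X (Top n Y)"
  by (simp add: Top_def minner_mdiff1 minner_mdiff2 minner_msc1 minner_msc2 Dder_adj)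

lemma cmod_n1: "cmod (of_nat n + 1 :: complex) = real n + 1" "cmod (1 + of_nat n :: complex) = 1 + real n"
proof -
  have e: "(of_nat n + 1 :: complex) = of_nat (Suc n)" by simp
  show "cmod (of_nat n + 1 :: complex) = real n + 1" unfolding e norm_of_nat by simp
  have e2: "(1 + of_nat n :: complex) = of_nat (Suc n)" by simp
  show "cmod (1 + of_nat n :: complex) = 1 + real n" unfolding e2 norm_of_nat by simp
qed

lemma a1: "(x::real) > 0 \<Longrightarrow> 1 / (x * (x + 1)) * (x + 1)\<^sup>2 * N = (x + 1) / x * N"
proof -
  assume x: "x > 0"
  have h: "x * (x + 1) \<noteq> 0" using x by simp
  show ?thesis using x h by (simp add: field_simps power2_eq_square)
qed
lemma a2: "(x::real) > 0 \<Longrightarrow> (x^2 - 2) / (x * (x + 1)) * (1 / (x * (x + 1))) * (1 + x)\<^sup>2 * ((x + 1) / x * N) = (x ^ 2 - 2) * (x + 1) / x ^ 3 * N"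
proof -
  assume x: "x > 0"
  have h: "x * (x + 1) \<noteq> 0" using x by simp
  have h2: "x * (x + 1) * (x * (x + 1)) \<noteq> 0" using x by simp
  have h3: "x * (x + 1) * (x * (x + 1)) * x \<noteq> 0" using x by simp
  show ?thesis using x h h2 h3 by (simp add: field_simps power2_eq_square power3_eq_cube)
qed

context
  fixes n :: nat and X :: cmat
  assumes n2: "n \<ge> 2" and X: "X \<in> slg n"
begin

lemma real_facts: "real n \<ge> 2" using n2 by simp

definition "sig = sqrt (1 / (real n * (real n + 1)))"

lemma sig_sq: "sig\<^sup>2 = 1 / (real n * (real n + 1))" unfolding sig_def by simp
lemma cmod_sI: "cmod (sI n) = sig" by (simp add: sI_def sig_def)

lemma cmod_x2: "(cmod (minner n X (Iden n)))\<^sup>2 = (real n + 1) / real n * (cmod (X n n))\<^sup>2"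
proof -
  have "cmod (minner n X (Iden n)) = sig * (real n + 1) * cmod (X n n)"
    unfolding slg_xI[OF X] by (simp add: norm_mult cmod_sI cmod_n1)
  hence "(cmod (minner n X (Iden n)))\<^sup>2 = sig\<^sup>2 * (real n + 1)\<^sup>2 * (cmod (X n n))\<^sup>2"
    by (simp add: power_mult_distrib)
  also have "\<dots> = (real n + 1) / real n * (cmod (X n n))\<^sup>2"
    unfolding sig_sq by (rule a1) (use real_facts in simp)
  finally show ?thesis .
qed

lemma cmod_KC: "(cmod (KC n X))\<^sup>2 = (real n ^ 2 - 2) * (real n + 1) / real n ^ 3 * (cmod (X n n))\<^sup>2"
proof -
  define r where "r = (real n ^ 2 - 2) / (real n * (real n + 1))"
  have "real n * real n \<ge> 2 * 2" using real_facts by (intro mult_mono) auto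
  moreover have "real n * (real n + 1) > 0" using real_facts by simp
  ultimately have r0: "r \<ge> 0" unfolding r_def by (intro divide_nonneg_pos) (auto simp: power2_eq_square)
  have c1: "cmod (1 + of_nat n :: complex) = 1 + real n" by (rule cmod_n1(2))
  have "cmod (KC n X) = sqrt r * (sig * (1 + real n)) * cmod (minner n X (Iden n))"
  proof -
    have mi: "minner n (Iden n) X = cnj (minner n X (Iden n))" by (simp add: minner_cnj)
    show ?thesis unfolding KC_def r_def[symmetric] mi norm_mult complex_mod_cnj cmod_sI c1 norm_of_real
      using r0 by simp
  qed
  hence "(cmod (KC n X))\<^sup>2 = r * sig\<^sup>2 * (1 + real n)\<^sup>2 * (cmod (minner n X (Iden n)))\<^sup>2"
    using r0 by (simp add: power_mult_distrib)
  also have "\<dots> = (real n ^ 2 - 2) * (real n + 1) / real n ^ 3 * (cmod (X n n))\<^sup>2"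
    unfolding cmod_x2 sig_sq r_def by (rule a2) (use real_facts in simp)
  finally show ?thesis .
qed


lemma real_id: "(x::real) > 0 \<Longrightarrow>
  x * (LL + C + R + N) - 1 / x * (2 * ((x + 1) / x * N) + (C + R))
  = (2 * x * LL - 2 * N + 2 * (x - 1 / x) * (C + R) + 2 * x * ((x ^ 2 - 2) * (x + 1) / x ^ 3 * N)) / 2"
proof -
  assume x: "x > 0"
  have h: "x * x \<noteq> 0" "x * x * x \<noteq> 0" "x \<noteq> 0" using x by auto
  show ?thesis using x h by (simp add: field_simps power2_eq_square power3_eq_cube)
qed

lemma Top_quad: "minner n (Top n X) X =
   complex_of_real (\<Sum>j<length (theB n). \<Sum>i<j. (cmod (minner n (mu_inf n (theB n!i) (theB n!j)) X))\<^sup>2)"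
proof -
  define LL where "LL = (\<Sum>a<n. \<Sum>d<n. (cmod (X a d))\<^sup>2)"
  define C where "C = (\<Sum>a<n. (cmod (X a n))\<^sup>2)"
  define R where "R = (\<Sum>b<n. (cmod (X n b))\<^sup>2)"
  define N where "N = (cmod (X n n))\<^sup>2"
  have sum_eq: "(\<Sum>j<length (theB n). \<Sum>i<j. (cmod (minner n (mu_inf n (theB n!i) (theB n!j)) X))\<^sup>2)
      = (2 * real n * LL - 2 * N + 2 * (real n - 1 / real n) * (C + R) + 2 * real n * ((real n ^ 2 - 2) * (real n + 1) / real n ^ 3 * N)) / 2"
    unfolding quad_sum[OF n2 X theB] total_sum[OF n2 X] cmod_KC LL_def C_def R_def N_def by simp
  have m1: "minner n X X = complex_of_real (LL + C + R + N)"
    unfolding minner_self split2 LL_def C_def R_def N_def ..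
  have m2: "minner n (prCI n X) X = complex_of_real ((real n + 1) / real n * N)"
  proof -
    have "minner n (prCI n X) X = minner n X (Iden n) * cnj (minner n X (Iden n))"
      by (simp add: prCI_def minner_msc1 minner_cnj)
    also have "\<dots> = complex_of_real ((cmod (minner n X (Iden n)))\<^sup>2)" by (simp only: complex_norm_square)
    finally show ?thesis unfolding cmod_x2 N_def .
  qed
  have m3: "minner n (prS n X) X = complex_of_real (C + R)"
  proof -
    have "minner n (prS n X) X = complex_of_real (\<Sum>a\<le>n. \<Sum>b\<le>n. (cmod (prS n X a b))\<^sup>2)"
      unfolding prS_adj minner_self ..
    also have "(\<Sum>a\<le>n. \<Sum>b\<le>n. (cmod (prS n X a b))\<^sup>2) = C + R"
      unfolding split2 C_def R_def by (simp add: prS_def)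
    finally show ?thesis .
  qed
  have "minner n (Top n X) X = of_nat n * minner n X X - 1 / of_nat n * (2 * minner n (prCI n X) X + minner n (prS n X) X)"
    using X by (simp add: Top_def Dder_def minner_mdiff1 minner_msc1 minner_madd1)
  also have "\<dots> = complex_of_real (real n * (LL + C + R + N) - 1 / real n * (2 * ((real n + 1) / real n * N) + (C + R)))"
    unfolding m1 m2 m3 by simp
  also have "real n * (LL + C + R + N) - 1 / real n * (2 * ((real n + 1) / real n * N) + (C + R))
     = (2 * real n * LL - 2 * N + 2 * (real n - 1 / real n) * (C + R) + 2 * real n * ((real n ^ 2 - 2) * (real n + 1) / real n ^ 3 * N)) / 2"
    by (rule real_id) (use real_facts in simp)
  finally show ?thesis unfolding sum_eq .
qed

end

lemma Top_Pprop: assumes n2: "n \<ge> 2" shows "Pprop n (mu_inf n) (theB n) (Top n)"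
  unfolding Pprop_def using lin_Top Top_herm Top_quad[OF n2] by (auto simp: Top_def)

lemma P_op_mu_inf: assumes n2: "n \<ge> 2" shows "P_op n (mu_inf n) = Top n"
  by (rule P_op_unique[OF Top_Pprop[OF n2]])


lemma slg_hinv: "X \<in> slg n \<Longrightarrow> hinv n y z X \<in> slg n"
  by (simp add: hinv_def slg_madd slg_msc slg_prSL slg_prCI slg_prS)
lemma slg_hmap: "X \<in> slg n \<Longrightarrow> hmap n y z X \<in> slg n"
  by (simp add: hmap_def slg_madd slg_msc slg_prSL slg_prCI slg_prS)
lemma slg_mu_yz: "U \<in> slg n \<Longrightarrow> V \<in> slg n \<Longrightarrow> mu_yz n y z U V \<in> slg n"
  unfolding mu_yz_def by (intro slg_hmap slg_comm slg_supp slg_hinv)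
lemma slg_mu_inf: "U \<in> slg n \<Longrightarrow> V \<in> slg n \<Longrightarrow> mu_inf n U V \<in> slg n"
  unfolding mu_inf_def
  by (intro slg_madd slg_msc slg_prCI slg_comm slg_supp slg_prSL slg_prS)

lemma mu_inf_F: assumes "n \<ge> 1" "X \<in> slg n" "Y \<in> slg n"
  shows "mu_inf n X Y a b = F1 n X Y a b
    + complex_of_real (sqrt ((real n ^ 2 - 2) / (real n * (real n + 1)))) * F4 n X Y a b"
  by (simp add: mu_inf_def F1_def[OF assms] F4_def[OF assms])

lemma minner_tendsto:
  assumes "\<And>a b. ((\<lambda>t. M t a b) \<longlongrightarrow> L a b) F"
  shows "((\<lambda>t. minner n X (M t)) \<longlongrightarrow> minner n X L) F"
  unfolding minner_def by (intro tendsto_intros assms)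

lemma Qop_tendsto:
  assumes X: "X \<in> slg n" and B: "set B \<subseteq> slg n"
    and lim: "\<And>U V a b. U \<in> slg n \<Longrightarrow> V \<in> slg n \<Longrightarrow> ((\<lambda>t. \<mu> t U V a b) \<longlongrightarrow> \<nu> U V a b) F"
  shows "((\<lambda>t. Qop n (\<mu> t) B X a b) \<longlongrightarrow> Qop n \<nu> B X a b) F"
proof -
  have inB: "B ! i \<in> slg n" if "i < length B" for i using B that by (auto simp: subset_code(1))
  show ?thesis
    unfolding Qop_def using X
    apply simp
    apply (intro tendsto_sum tendsto_mult minner_tendsto lim inB)
    apply auto
    done
qed

theorem corollary3p10:
  fixes n :: nat and y z :: "real \<Rightarrow> real"
  assumes n2: "n \<ge> 2"
    and pos: "\<And>t. t \<ge> 0 \<Longrightarrow> y t > 0 \<and> z t > 0"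
    and ode_y: "\<And>t. t \<ge> 0 \<Longrightarrow>
        (y has_real_derivative ((z t)\<^sup>2 * (real n + 1 - y t) - real n * y t)) (at t within {0..})"
    and ode_z: "\<And>t. t \<ge> 0 \<Longrightarrow>
        (z has_real_derivative ((real n + 1) / real n * z t * (real n - 1 + y t) - (real n + (z t)\<^sup>2) * z t))
          (at t within {0..})"
    and y0: "(y \<longlongrightarrow> 0) at_top"
    and z0: "(z \<longlongrightarrow> 0) at_top"
  shows "(\<forall>X\<in>slg n. \<forall>Y\<in>slg n. \<forall>a b.
            ((\<lambda>t. mu_yz n (y t) (z t) X Y a b) \<longlongrightarrow> mu_inf n X Y a b) at_top)
       \<and> (\<forall>X\<in>slg n. \<forall>a b.
            ((\<lambda>t. P_op n (mu_yz n (y t) (z t)) X a b) \<longlongrightarrow> P_op n (mu_inf n) X a b) at_top)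
       \<and> (\<forall>X\<in>slg n. P_op n (mu_inf n) X =
            mdiff (msc (of_nat n) X) (msc (1 / of_nat n) (Dder n X)))
       \<and> lin_endo n (Dder n)
       \<and> is_derivation n (mu_inf n) (Dder n)
       \<and> shrinking_algebraic_soliton n (mu_inf n)"
proof -
  have n1: "n \<ge> 1" using n2 by simp
  define k where "k = sqrt ((real n ^ 2 - 2) / (real n * (real n + 1)))"
  have rl: "((\<lambda>t. z t / sqrt (y t)) \<longlongrightarrow> k) at_top"
    unfolding k_def by (rule ratio_limit[OF n2 pos ode_y ode_z y0 z0])
  have sy: "((\<lambda>t. sqrt (y t)) \<longlongrightarrow> 0) at_top"
    using tendsto_real_sqrt[OF y0] by simp
  have part1: "((\<lambda>t. mu_yz n (y t) (z t) X Y a b) \<longlongrightarrow> mu_inf n X Y a b) at_top"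
    if X: "X \<in> slg n" and Y: "Y \<in> slg n" for X Y a b
  proof -
    have ev: "\<forall>\<^sub>F t in at_top. F1 n X Y a b + complex_of_real (sqrt (y t)) * F2 n X Y a b
        + complex_of_real (z t) * F3 n X Y a b + complex_of_real (z t / sqrt (y t)) * F4 n X Y a b
        = mu_yz n (y t) (z t) X Y a b"
      unfolding eventually_at_top_linorder
      by (rule exI[of _ 0]) (use pos in \<open>auto simp: mu_yz_expand[OF n1 X Y]\<close>)
    have "((\<lambda>t. F1 n X Y a b + complex_of_real (sqrt (y t)) * F2 n X Y a b
        + complex_of_real (z t) * F3 n X Y a b + complex_of_real (z t / sqrt (y t)) * F4 n X Y a b)
        \<longlongrightarrow> F1 n X Y a b + complex_of_real 0 * F2 n X Y a b + complex_of_real 0 * F3 n X Y a b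
           + complex_of_real k * F4 n X Y a b) at_top"
      by (intro tendsto_intros sy z0 rl)
    hence "((\<lambda>t. F1 n X Y a b + complex_of_real (sqrt (y t)) * F2 n X Y a b
        + complex_of_real (z t) * F3 n X Y a b + complex_of_real (z t / sqrt (y t)) * F4 n X Y a b)
        \<longlongrightarrow> mu_inf n X Y a b) at_top"
      by (simp add: mu_inf_F[OF n1 X Y] k_def)
    thus ?thesis using ev by (rule Lim_transform_eventually)
  qed
  have Bs: "set (theB n) \<subseteq> slg n" using theB by (simp add: unitary_basis_def)
  have part2: "((\<lambda>t. P_op n (mu_yz n (y t) (z t)) X a b) \<longlongrightarrow> P_op n (mu_inf n) X a b) at_top"
    if X: "X \<in> slg n" for X a b
  proof -
    have e1: "P_op n (mu_yz n (y t) (z t)) = Qop n (mu_yz n (y t) (z t)) (theB n)" for t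
      by (rule P_op_Qop) (rule slg_mu_yz)
    have e2: "P_op n (mu_inf n) = Qop n (mu_inf n) (theB n)"
      by (rule P_op_Qop) (rule slg_mu_inf)
    show ?thesis unfolding e1 e2
      by (rule Qop_tendsto[OF X Bs]) (rule part1)
  qed
  have part3: "P_op n (mu_inf n) X = mdiff (msc (of_nat n) X) (msc (1 / of_nat n) (Dder n X))"
    if X: "X \<in> slg n" for X
    using X by (simp add: P_op_mu_inf[OF n2] Top_def)
  have deriv: "Dder n (mu_inf n X Y) = madd (mu_inf n (Dder n X) Y) (mu_inf n X (Dder n Y))"
    if X: "X \<in> slg n" and Y: "Y \<in> slg n" for X Y
  proof -
    note fc = facts[OF n1 X Y]
    have d1: "prSL n (Dder n X) = mzero" "prS n (Dder n X) = prS n X"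
      "prSL n (Dder n Y) = mzero" "prS n (Dder n Y) = prS n Y"
      by (simp_all add: Dder_def prSL_madd prSL_msc prS_madd prS_msc prSL_prCI[OF n1] prSL_prS prS_prCI prS_prS)
    show ?thesis
      unfolding mu_inf_def d1
      by (intro ext) (simp add: Dder_def lin_simps fc prCI_prCI[OF n1] prS_prCI algebra_simps)
  qed
  have isd: "is_derivation n (mu_inf n) (Dder n)"
    unfolding is_derivation_def using deriv by blast
  define D' where "D' X = msc (- (1 / of_nat n)) (Dder n X)" for X
  have linD': "lin_endo n D'"
    using lin_Dder unfolding lin_endo_def D'_def
    by (auto simp: slg_msc intro!: ext simp: algebra_simps)
  have adjD': "minner n (D' X) Y = minner n X (D' Y)" for X Y
    by (simp add: D'_def minner_msc1 minner_msc2 Dder_adj)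
  have isdD': "is_derivation n (mu_inf n) D'"
    unfolding is_derivation_def D'_def
    using deriv by (auto intro!: ext simp: mu_inf_msc1 mu_inf_msc2 algebra_simps)
  have sol: "algebraic_soliton n (mu_inf n) (real n)"
    unfolding algebraic_soliton_def
  proof (intro exI[of _ D'] exI[of _ D'] conjI linD' isdD' ballI allI)
    fix X Y show "minner n (D' X) Y = minner n X (D' Y)" by (rule adjD')
  next
    fix X assume X: "X \<in> slg n"
    show "P_op n (mu_inf n) X = madd (msc (complex_of_real (real n)) X) (msc (1/2) (madd (D' X) (D' X)))"
      using X by (intro ext) (simp add: P_op_mu_inf[OF n2] Top_def D'_def algebra_simps)
  qed
  have shr: "shrinking_algebraic_soliton n (mu_inf n)"
    unfolding shrinking_algebraic_soliton_def using sol n2 by (intro exI[of _ "real n"]) auto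
  show ?thesis using part1 part2 part3 lin_Dder isd shr by blast
qed


end
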